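(* Let $b\in\mathbb{R}\setminus\{0\}$, $a_0>|b|$, $t\in\mathbb{R}$ and $a:=a_0-it$. Put $W_a(z):=\exp\big[-a|z|^2+\frac b2(z^2+\bar z^2)\big]$ for $z\in\mathbb{C}$ and $c_a:=\sqrt{(a^2-b^2)/(2b)}$. Then for all integers $k,l\ge0$, $$\int_{\mathbb{C}}H_l(c_az)H_k(c_a\bar z)W_a(z)\,dz=\delta_{lk}\,\frac{k!\,\pi\,(2a)^k}{\sqrt{a^2-b^2}\;b^k},$$ where $\sqrt{\cdot}$ denotes the principal branch and $dz$ is Lebesgue measure on $\mathbb{C}\cong\mathbb{R}^2$.
   Context: $H_k$ denotes the $k$-th (physicists') Hermite polynomial, $H_k(z)=\frac{k!}{2\pi i}\oint e^{-s^2+2zs}s^{-(k+1)}ds$ with a contour around the origin, i.e. the polynomials orthogonal on $\mathbb{R}$ w.r.t. $e^{-x^2}$ with leading coefficient $2^k$. (The branch chosen for $c_a$ does not affect the left-hand side for $k=l$, and the left-hand side vanishes for $k\neq l$ for either branch.) *)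

theory Defs
  imports "HOL-Analysis.Analysis"
begin

text \<open>This is the explicit coefficient formula obtained from the generating function
  exp(-s^2 + 2 z s) = sum_k H_k(z) s^k / k!, i.e. from the contour-integral definition.\<close>
definition hermite :: "nat \<Rightarrow> complex \<Rightarrow> complex" where
  "hermite k z = of_nat (fact k) *
     (\<Sum>m\<le>k div 2. (-1) ^ m * (2 * z) ^ (k - 2 * m) / (of_nat (fact m) * of_nat (fact (k - 2 * m))))"

definition W :: "complex \<Rightarrow> real \<Rightarrow> complex \<Rightarrow> complex" where
  "W a b z = exp (- a * of_real ((cmod z)\<^sup>2) + of_real b / 2 * (z\<^sup>2 + (cnj z)\<^sup>2))"

end

theory Submission
  imports Defs "HOL-Probability.Distributions" "HOL-Real_Asymp.Real_Asymp"
begin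

lemma hermite_0 [simp]: "hermite 0 z = 1" by (simp add: hermite_def)
lemma hermite_1 [simp]: "hermite 1 z = 2 * z" by (simp add: hermite_def)
lemma hermite_Suc0 [simp]: "hermite (Suc 0) z = 2 * z" by (simp add: hermite_def)

lemma hermite_at0:
  "hermite k 0 = (if even k then (-1) ^ (k div 2) * of_nat (fact k) / of_nat (fact (k div 2)) else 0)"
proof -
  have "(\<Sum>m\<le>k div 2. (-1) ^ m * (2 * (0::complex)) ^ (k - 2 * m) / (of_nat (fact m) * of_nat (fact (k - 2 * m))))
      = (\<Sum>m\<in>{..k div 2}. if m = k div 2 then (if even k then (-1) ^ m / of_nat (fact m) else 0) else 0)"
    by (intro sum.cong refl) (auto simp: zero_power, presburger+)
  also have "\<dots> = (if even k then (-1) ^ (k div 2) / of_nat (fact (k div 2)) else 0)"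
    by (subst sum.delta) auto
  finally show ?thesis by (simp add: hermite_def)
qed

lemma hermite_deriv:
  "(hermite (Suc n) has_field_derivative (2 * of_nat (Suc n) * hermite n z)) (at z)"
proof -
  define d where "d m = (-1) ^ m * (of_nat (Suc n - 2 * m) * (2 * (2 * z) ^ (Suc n - 2 * m - 1))) /
        (of_nat (fact m) * of_nat (fact (Suc n - 2 * m)) :: complex)" for m
  have D: "((\<lambda>z. \<Sum>m\<le>Suc n div 2. (-1) ^ m * (2 * z) ^ (Suc n - 2 * m) /
           (of_nat (fact m) * of_nat (fact (Suc n - 2 * m)))) has_field_derivative
         (\<Sum>m\<le>Suc n div 2. d m)) (at z)"
    unfolding d_def
  proof (rule DERIV_sum)
    fix m show "((\<lambda>z. (-1) ^ m * (2 * z) ^ (Suc n - 2 * m) /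
           (of_nat (fact m) * of_nat (fact (Suc n - 2 * m)))) has_field_derivative
          (-1) ^ m * (of_nat (Suc n - 2 * m) * (2 * (2 * z) ^ (Suc n - 2 * m - 1))) /
        (of_nat (fact m) * of_nat (fact (Suc n - 2 * m)))) (at z)"
      by (rule derivative_eq_intros refl | simp)+
  qed
  have T: "of_nat (fact (Suc n)) * d m = 2 * of_nat (Suc n) * (of_nat (fact n) *
     ((-1) ^ m * (2 * z) ^ (n - 2 * m) / (of_nat (fact m) * of_nat (fact (n - 2 * m)))))"
    if "2 * m \<le> n" for m
  proof -
    obtain j where j: "j = n - 2 * m" by blast
    have e: "Suc n - 2 * m = Suc j" using that j by simp
    have f1: "(of_nat (fact (Suc j)) :: complex) = of_nat (Suc j) * of_nat (fact j)"
      by (simp only: fact_Suc of_nat_mult of_nat_id)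
    have f2: "(of_nat (fact (Suc n)) :: complex) = of_nat (Suc n) * of_nat (fact n)"
      by (simp only: fact_Suc of_nat_mult of_nat_id)
    have nz: "(of_nat (Suc j) :: complex) \<noteq> 0" "(of_nat (fact j) :: complex) \<noteq> 0"
      "(of_nat (fact m) :: complex) \<noteq> 0" by (simp_all del: of_nat_Suc)
    show ?thesis unfolding d_def e f1 f2 j[symmetric] using nz
      by (simp add: field_simps del: of_nat_Suc)
  qed
  have S: "of_nat (fact (Suc n)) * (\<Sum>m\<le>Suc n div 2. d m) = 2 * of_nat (Suc n) * hermite n z"
  proof (cases "even n")
    case True
    then have "Suc n div 2 = n div 2" by presburger
    then show ?thesis unfolding hermite_def sum_distrib_left
      by (intro sum.cong refl) (use T in \<open>auto simp: mult.assoc\<close>)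
  next
    case False
    then have "Suc n div 2 = Suc (n div 2)" by presburger
    moreover have "d (Suc (n div 2)) = 0" using False unfolding d_def
      by (subgoal_tac "Suc n - 2 * Suc (n div 2) = 0") (simp, presburger)
    ultimately show ?thesis unfolding hermite_def sum_distrib_left
      by (simp, intro sum.cong refl) (use T in \<open>auto simp: mult.assoc\<close>)
  qed
  show ?thesis unfolding hermite_def[of "Suc n"] using DERIV_cmult[OF D, of "of_nat (fact (Suc n))"] S[symmetric]
    by simp
qed

lemma hermite_deriv':
  "(hermite n has_field_derivative (2 * of_nat n * hermite (n - 1) z)) (at z)"
proof (cases n)
  case 0
  have "hermite 0 = (\<lambda>_. 1)" by (rule ext) simp
  then show ?thesis using 0 by simp
next
  case (Suc m) then show ?thesis using hermite_deriv[of m z] by simp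
qed

lemma hermite_at0_rec: "hermite (Suc (Suc n)) 0 + 2 * of_nat (Suc n) * hermite n 0 = 0"
proof (cases "even n")
  case True
  then obtain h where h: "n = 2 * h" by blast
  have d1: "Suc (Suc n) div 2 = Suc h" "n div 2 = h" using h by auto
  have f1: "(of_nat (fact (Suc (Suc n))) :: complex) = of_nat (Suc (Suc n)) * of_nat (Suc n) * of_nat (fact n)"
    by (simp only: fact_Suc of_nat_mult of_nat_id mult.assoc)
  have f2: "(of_nat (fact (Suc h)) :: complex) = of_nat (Suc h) * of_nat (fact h)"
    by (simp only: fact_Suc of_nat_mult of_nat_id)
  have nz: "(of_nat (Suc h) :: complex) \<noteq> 0" "(of_nat (fact h) :: complex) \<noteq> 0"
    by (simp_all del: of_nat_Suc)
  have e: "(of_nat (Suc (Suc n)) :: complex) = 2 * of_nat (Suc h)" using h by simp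
  show ?thesis using True nz unfolding hermite_at0 d1 f1 f2 e
    by (simp add: field_simps del: of_nat_Suc)
next
  case False then show ?thesis by (simp add: hermite_at0)
qed

lemmas hermite_deriv_chain [derivative_intros] = hermite_deriv'[THEN DERIV_chain2]

lemma hermite_rec:
  "hermite (Suc (Suc n)) z = 2 * z * hermite (Suc n) z - 2 * of_nat (Suc n) * hermite n z"
proof -
  define D where "D n z = hermite (Suc (Suc n)) z - 2 * z * hermite (Suc n) z + 2 * of_nat (Suc n) * hermite n z" for n z
  have DD: "(D n has_field_derivative (2 * of_nat (Suc n) * (hermite (Suc n) z - 2 * z * hermite n z + 2 * of_nat n * hermite (n - 1) z))) (at z)" for n z
  proof -
    have "(D n has_field_derivative (2 * of_nat (Suc (Suc n)) * hermite (Suc (Suc n) - 1) z * 1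
              - (2 * hermite (Suc n) z + 2 * z * (2 * of_nat (Suc n) * hermite (Suc n - 1) z * 1))
             + 2 * of_nat (Suc n) * (2 * of_nat n * hermite (n - 1) z * 1))) (at z)"
      unfolding D_def by (auto intro!: derivative_eq_intros simp: algebra_simps)
    then show ?thesis by (simp add: algebra_simps)
  qed
  have "\<forall>z. D n z = 0"
  proof (induction n)
    case (0)
    have "\<And>z. (D 0 has_field_derivative 0) (at z)"
      using DD[of 0] by simp
    then obtain c where c: "\<forall>z\<in>UNIV. D 0 z = c"
      using has_field_derivative_zero_constant[of UNIV "D 0"] by (auto intro: has_field_derivative_at_within)
    have "D 0 0 = 0" unfolding D_def using hermite_at0_rec[of 0] by simp
    then show ?case using c by auto
  next
    case (Suc m)
    have "\<And>z. (D (Suc m) has_field_derivative 0) (at z)"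
      using DD[of "Suc m"] Suc unfolding D_def by simp
    then obtain c where c: "\<forall>z\<in>UNIV. D (Suc m) z = c"
      using has_field_derivative_zero_constant[of UNIV "D (Suc m)"] by (auto intro: has_field_derivative_at_within)
    have "D (Suc m) 0 = 0" unfolding D_def using hermite_at0_rec[of "Suc m"] by simp
    then show ?case using c by auto
  qed
  then show ?thesis unfolding D_def by (simp add: algebra_simps)
qed

lemma hermite_bound: "\<exists>K. \<forall>w. norm (hermite n w) \<le> K * (1 + norm w) ^ n"
proof -
  define K where "K = fact n * (\<Sum>m\<le>n div 2. 2 ^ n / (fact m * fact (n - 2 * m)) :: real)"
  have "norm (hermite n w) \<le> K * (1 + norm w) ^ n" for w
  proof -
    have "norm (hermite n w) = fact n * norm (\<Sum>m\<le>n div 2. ((-1) ^ m * (2 * w) ^ (n - 2 * m) / (of_nat (fact m) * of_nat (fact (n - 2 * m)) :: complex)))"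
      unfolding hermite_def norm_mult by simp
    also have "\<dots> \<le> fact n * (\<Sum>m\<le>n div 2. norm ((-1) ^ m * (2 * w) ^ (n - 2 * m) / (of_nat (fact m) * of_nat (fact (n - 2 * m)) :: complex)))"
      by (intro mult_left_mono norm_sum) auto
    also have "\<dots> \<le> fact n * (\<Sum>m\<le>n div 2. 2 ^ n / (fact m * fact (n - 2 * m)) * (1 + norm w) ^ n)"
    proof (intro mult_left_mono sum_mono)
      fix m assume "m \<in> {..n div 2}"
      have "norm ((2::complex) * w) ^ (n - 2 * m) \<le> (2 * (1 + norm w)) ^ (n - 2 * m)"
        by (intro power_mono) (auto simp: norm_mult)
      also have "\<dots> \<le> (2 * (1 + norm w)) ^ n"
        by (intro power_increasing) auto
      also have "\<dots> = 2 ^ n * (1 + norm w) ^ n" by (rule power_mult_distrib)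
      finally have *: "norm ((2::complex) * w) ^ (n - 2 * m) \<le> 2 ^ n * (1 + norm w) ^ n" .
      show "norm ((-1) ^ m * (2 * w) ^ (n - 2 * m) / (of_nat (fact m) * of_nat (fact (n - 2 * m)) :: complex))
          \<le> 2 ^ n / (fact m * fact (n - 2 * m)) * (1 + norm w) ^ n"
        using * by (simp add: norm_mult norm_divide norm_power divide_right_mono)
    qed auto
    finally show ?thesis unfolding K_def by (simp add: sum_distrib_right mult.assoc)
  qed
  then show ?thesis by blast
qed

lemma cont_meas: "continuous_on UNIV f \<Longrightarrow> f \<in> borel_measurable lborel"
  by (simp add: borel_measurable_continuous_onI)

lemma gauss_mom_int:
  assumes p: "p > 0"
  shows "integrable lborel (\<lambda>x::real. \<bar>x\<bar> ^ j * exp (- p * x\<^sup>2))"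
proof -
  define \<sigma> where "\<sigma> = sqrt (1 / (2 * p))"
  have s2: "\<sigma>\<^sup>2 = 1 / (2 * p)" using p unfolding \<sigma>_def by simp
  have "integrable lborel (\<lambda>x. sqrt (2 * pi * \<sigma>\<^sup>2) * (normal_density 0 \<sigma> x * \<bar>x - 0\<bar> ^ j))"
    using p unfolding \<sigma>_def by (intro integrable_mult_right integrable_normal_moment_abs) auto
  moreover have "(\<lambda>x. sqrt (2 * pi * \<sigma>\<^sup>2) * (normal_density 0 \<sigma> x * \<bar>x - 0\<bar> ^ j)) = (\<lambda>x. \<bar>x\<bar> ^ j * exp (- p * x\<^sup>2))"
  proof (rule ext)
    fix x
    have "sqrt (2 * pi * \<sigma>\<^sup>2) > 0" using p s2 by simp
    moreover have "- (x - 0)\<^sup>2 / (2 * \<sigma>\<^sup>2) = - p * x\<^sup>2" using p unfolding s2 by simp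
    moreover have "\<sigma> > 0" using p unfolding \<sigma>_def by simp
    ultimately show "sqrt (2 * pi * \<sigma>\<^sup>2) * (normal_density 0 \<sigma> x * \<bar>x - 0\<bar> ^ j) = \<bar>x\<bar> ^ j * exp (- p * x\<^sup>2)" unfolding normal_density_def by (simp add: field_simps)
  qed
  ultimately show ?thesis by metis
qed

lemma gauss_poly_int:
  assumes p: "p > 0"
  shows "integrable lborel (\<lambda>x::real. (1 + \<bar>x\<bar>) ^ N * exp (- p * x\<^sup>2))"
proof -
  have "(1 + \<bar>x\<bar>) ^ N * exp (- p * x\<^sup>2) = (\<Sum>j\<le>N. of_nat (N choose j) * (\<bar>x\<bar> ^ j * exp (- p * x\<^sup>2)))" for x :: real
    by (subst add.commute, subst binomial_ring) (simp add: sum_distrib_right mult.assoc)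
  moreover have "integrable lborel (\<lambda>x::real. \<Sum>j\<le>N. of_nat (N choose j) * (\<bar>x\<bar> ^ j * exp (- p * x\<^sup>2)))"
    by (rule Bochner_Integration.integrable_sum) (intro integrable_mult_right gauss_mom_int p)
  ultimately show ?thesis by simp
qed

lemma gauss_decay:
  assumes p: "p > 0"
  shows "((\<lambda>x::real. (1 + \<bar>x\<bar>) ^ N * exp (- p * x\<^sup>2)) \<longlongrightarrow> 0) at_top"
    "((\<lambda>x::real. (1 + \<bar>x\<bar>) ^ N * exp (- p * x\<^sup>2)) \<longlongrightarrow> 0) at_bot"
  using p by real_asymp+

lemma norm_gexp: "norm (exp (- (\<gamma> * (complex_of_real x)\<^sup>2))) = exp (- Re \<gamma> * x\<^sup>2)"
proof -
  have "Re (\<gamma> * (complex_of_real x)\<^sup>2) = Re \<gamma> * x\<^sup>2"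
    by (simp add: power2_eq_square)
  then show ?thesis by simp
qed

lemma gexp_deriv:
  "((\<lambda>x. exp (- (\<gamma> * (complex_of_real x)\<^sup>2))) has_vector_derivative
     (- (2 * \<gamma> * complex_of_real x) * exp (- (\<gamma> * (complex_of_real x)\<^sup>2)))) (at x)"
proof -
  have "((\<lambda>w. exp (- (\<gamma> * w\<^sup>2))) has_field_derivative
     (- (2 * \<gamma> * complex_of_real x) * exp (- (\<gamma> * (complex_of_real x)\<^sup>2)))) (at (complex_of_real x))"
    by (auto intro!: derivative_eq_intros simp: algebra_simps)
  from has_vector_derivative_real_field[OF this] show ?thesis .
qed

lemma ibp1:
  fixes \<gamma> :: complex and g g' :: "real \<Rightarrow> complex"
  assumes \<gamma>: "Re \<gamma> > 0"
    and d: "\<And>x. (g has_vector_derivative g' x) (at x)"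
    and c: "continuous_on UNIV g'"
    and bg: "\<And>x. norm (g x) \<le> C * (1 + \<bar>x\<bar>) ^ N"
    and bg': "\<And>x. norm (g' x) \<le> C * (1 + \<bar>x\<bar>) ^ N"
  shows "integrable lborel (\<lambda>x. g' x * exp (- (\<gamma> * (complex_of_real x)\<^sup>2)))"
    "integrable lborel (\<lambda>x. complex_of_real x * g x * exp (- (\<gamma> * (complex_of_real x)\<^sup>2)))"
    "integral\<^sup>L lborel (\<lambda>x. g' x * exp (- (\<gamma> * (complex_of_real x)\<^sup>2))) =
       2 * \<gamma> * integral\<^sup>L lborel (\<lambda>x. complex_of_real x * g x * exp (- (\<gamma> * (complex_of_real x)\<^sup>2)))"
proof -
  define p where "p = Re \<gamma>"
  have p: "p > 0" using \<gamma> p_def by simp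
  define E where "E x = exp (- (\<gamma> * (complex_of_real x)\<^sup>2))" for x
  have nE: "norm (E x) = exp (- p * x\<^sup>2)" for x unfolding E_def p_def by (rule norm_gexp)
  have C0: "C \<ge> 0"
  proof -
    have P: "(1 + \<bar>0::real\<bar>) ^ N > 0" by simp
    have "0 \<le> C * (1 + \<bar>0::real\<bar>) ^ N" by (rule order_trans[OF norm_ge_zero bg])
    then show ?thesis using P by (auto simp: zero_le_mult_iff)
  qed
  have bnd: "norm (g x * E x) \<le> C * ((1 + \<bar>x\<bar>) ^ N * exp (- p * x\<^sup>2))" for x
  proof -
    have "norm (g x * E x) = norm (g x) * exp (- p * x\<^sup>2)" by (simp add: norm_mult nE)
    also have "\<dots> \<le> C * (1 + \<bar>x\<bar>) ^ N * exp (- p * x\<^sup>2)" by (intro mult_right_mono bg) auto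
    finally show ?thesis by (simp add: mult.assoc)
  qed
  have cg: "continuous_on UNIV g"
    using d by (intro continuous_at_imp_continuous_on ballI has_vector_derivative_continuous) auto
  have cE: "continuous_on UNIV E" unfolding E_def by (intro continuous_intros)
  have i1: "integrable lborel (\<lambda>x. g' x * E x)"
  proof (rule Bochner_Integration.integrable_bound)
    show "integrable lborel (\<lambda>x. C * ((1 + \<bar>x\<bar>) ^ N * exp (- p * x\<^sup>2)))"
      by (intro integrable_mult_right gauss_poly_int p)
    show "(\<lambda>x. g' x * E x) \<in> borel_measurable lborel"
      by (intro cont_meas continuous_intros c cE)
    show "AE x in lborel. norm (g' x * E x) \<le> norm (C * ((1 + \<bar>x\<bar>) ^ N * exp (- p * x\<^sup>2)))"
    proof (intro AE_I2)
      fix x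
      have "norm (g' x * E x) \<le> C * (1 + \<bar>x\<bar>) ^ N * exp (- p * x\<^sup>2)"
        unfolding norm_mult nE by (intro mult_right_mono bg') auto
      also have "\<dots> \<le> norm (C * ((1 + \<bar>x\<bar>) ^ N * exp (- p * x\<^sup>2)))" by (simp add: mult.assoc)
      finally show "norm (g' x * E x) \<le> norm (C * ((1 + \<bar>x\<bar>) ^ N * exp (- p * x\<^sup>2)))" .
    qed
  qed
  then show "integrable lborel (\<lambda>x. g' x * exp (- (\<gamma> * (complex_of_real x)\<^sup>2)))" by (simp add: E_def)
  have i2: "integrable lborel (\<lambda>x. complex_of_real x * g x * E x)"
  proof (rule Bochner_Integration.integrable_bound)
    show "integrable lborel (\<lambda>x. C * ((1 + \<bar>x\<bar>) ^ Suc N * exp (- p * x\<^sup>2)))"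
      by (intro integrable_mult_right gauss_poly_int p)
    show "(\<lambda>x. complex_of_real x * g x * E x) \<in> borel_measurable lborel"
      by (intro cont_meas continuous_intros cg cE)
    show "AE x in lborel. norm (complex_of_real x * g x * E x) \<le> norm (C * ((1 + \<bar>x\<bar>) ^ Suc N * exp (- p * x\<^sup>2)))"
    proof (intro AE_I2)
      fix x
      have "norm (complex_of_real x * g x * E x) = \<bar>x\<bar> * norm (g x) * exp (- p * x\<^sup>2)"
        unfolding norm_mult nE by simp
      also have "\<dots> \<le> (1 + \<bar>x\<bar>) * (C * (1 + \<bar>x\<bar>) ^ N) * exp (- p * x\<^sup>2)"
        by (intro mult_right_mono mult_mono bg) auto
      also have "\<dots> = norm (C * ((1 + \<bar>x\<bar>) ^ Suc N * exp (- p * x\<^sup>2)))" using C0 by (simp add: abs_mult)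
      finally show "norm (complex_of_real x * g x * E x) \<le> norm (C * ((1 + \<bar>x\<bar>) ^ Suc N * exp (- p * x\<^sup>2)))" .
    qed
  qed
  then show "integrable lborel (\<lambda>x. complex_of_real x * g x * exp (- (\<gamma> * (complex_of_real x)\<^sup>2)))" by (simp add: E_def)
  define f where "f x = g' x * E x - 2 * \<gamma> * (complex_of_real x * g x * E x)" for x
  have fi: "integrable lborel f" unfolding f_def using i1 i2 by auto
  have FD: "((\<lambda>x. g x * E x) has_vector_derivative f x) (at x)" for x
  proof -
    have "((\<lambda>x. g x * E x) has_vector_derivative (g x * (- (2 * \<gamma> * complex_of_real x) * E x) + g' x * E x)) (at x)"
      unfolding E_def by (intro has_vector_derivative_mult d gexp_deriv)
    then show ?thesis unfolding f_def by (simp add: algebra_simps)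
  qed
  have lim0: "((\<lambda>x. g x * E x) \<longlongrightarrow> 0) F" if F: "((\<lambda>x::real. (1 + \<bar>x\<bar>) ^ N * exp (- p * x\<^sup>2)) \<longlongrightarrow> 0) F" for F
  proof (rule Lim_null_comparison)
    show "\<forall>\<^sub>F x in F. norm (g x * E x) \<le> C * ((1 + \<bar>x\<bar>) ^ N * exp (- p * x\<^sup>2))"
      by (intro always_eventually allI bnd)
    show "((\<lambda>x. C * ((1 + \<bar>x\<bar>) ^ N * exp (- p * x\<^sup>2))) \<longlongrightarrow> 0) F"
      using tendsto_mult_right_zero[OF F] by simp
  qed
  have "(LBINT x=-\<infinity>..\<infinity>. f x) = 0 - 0"
  proof (rule interval_integral_FTC_integrable)
    show "set_integrable lborel (einterval (-\<infinity>) \<infinity>) f"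
      using fi by (simp add: set_integrable_def)
    show "isCont f x" for x unfolding f_def
      using c cg cE by (intro continuous_intros) (auto simp: continuous_on_eq_continuous_at)
    show "((\<lambda>x. g x * E x) has_vector_derivative f x) (at x)" for x by (rule FD)
    show "(((\<lambda>x. g x * E x) \<circ> real_of_ereal) \<longlongrightarrow> 0) (at_right (-\<infinity>))"
      unfolding ereal_tendsto_simps using lim0[OF gauss_decay(2)[OF p]] .
    show "(((\<lambda>x. g x * E x) \<circ> real_of_ereal) \<longlongrightarrow> 0) (at_left \<infinity>)"
      unfolding ereal_tendsto_simps using lim0[OF gauss_decay(1)[OF p]] .
  qed simp
  then have "integral\<^sup>L lborel f = 0"
    by (simp add: interval_lebesgue_integral_def set_lebesgue_integral_def)
  then show "integral\<^sup>L lborel (\<lambda>x. g' x * exp (- (\<gamma> * (complex_of_real x)\<^sup>2))) =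
       2 * \<gamma> * integral\<^sup>L lborel (\<lambda>x. complex_of_real x * g x * exp (- (\<gamma> * (complex_of_real x)\<^sup>2)))"
    unfolding f_def E_def[symmetric] using i1 i2 by simp
qed

definition pb :: "(real \<Rightarrow> real \<Rightarrow> complex) \<Rightarrow> bool" where
  "pb f \<longleftrightarrow> continuous_on UNIV (\<lambda>p. f (fst p) (snd p)) \<and>
     (\<exists>C N. \<forall>x y. norm (f x y) \<le> C * (1 + \<bar>x\<bar>) ^ N * (1 + \<bar>y\<bar>) ^ N)"

definition Eg :: "complex \<Rightarrow> complex \<Rightarrow> real \<Rightarrow> real \<Rightarrow> complex" where
  "Eg \<alpha> \<beta> x y = exp (- (\<alpha> * (complex_of_real x)\<^sup>2)) * exp (- (\<beta> * (complex_of_real y)\<^sup>2))"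

definition II :: "complex \<Rightarrow> complex \<Rightarrow> (real \<Rightarrow> real \<Rightarrow> complex) \<Rightarrow> complex" where
  "II \<alpha> \<beta> f = integral\<^sup>L lborel (\<lambda>(x,y). f x y * Eg \<alpha> \<beta> x y)"

lemma pb_mono_bound:
  assumes "norm (f x y) \<le> C * (1 + \<bar>x\<bar>) ^ N * (1 + \<bar>y\<bar>) ^ N" "N \<le> M"
  shows "norm (f x y) \<le> \<bar>C\<bar> * (1 + \<bar>x\<bar>) ^ M * (1 + \<bar>y\<bar>) ^ M"
proof -
  have "C * (1 + \<bar>x\<bar>) ^ N * (1 + \<bar>y\<bar>) ^ N \<le> \<bar>C\<bar> * ((1 + \<bar>x\<bar>) ^ N * (1 + \<bar>y\<bar>) ^ N)"
    by (simp add: mult.assoc abs_le_iff mult_right_mono)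
  also have "\<dots> \<le> \<bar>C\<bar> * ((1 + \<bar>x\<bar>) ^ M * (1 + \<bar>y\<bar>) ^ M)"
    by (intro mult_left_mono mult_mono power_increasing assms(2)) auto
  finally show ?thesis using assms(1) by (simp add: mult.assoc)
qed

lemma pb_common:
  assumes "pb f" "pb g"
  shows "\<exists>C N. \<forall>x y. norm (f x y) \<le> C * (1 + \<bar>x\<bar>) ^ N * (1 + \<bar>y\<bar>) ^ N \<and>
                      norm (g x y) \<le> C * (1 + \<bar>x\<bar>) ^ N * (1 + \<bar>y\<bar>) ^ N"
proof -
  obtain C1 N1 where 1: "\<And>x y. norm (f x y) \<le> C1 * (1 + \<bar>x\<bar>) ^ N1 * (1 + \<bar>y\<bar>) ^ N1"
    using assms(1) unfolding pb_def by blast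
  obtain C2 N2 where 2: "\<And>x y. norm (g x y) \<le> C2 * (1 + \<bar>x\<bar>) ^ N2 * (1 + \<bar>y\<bar>) ^ N2"
    using assms(2) unfolding pb_def by blast
  have "norm (f x y) \<le> (\<bar>C1\<bar> + \<bar>C2\<bar>) * (1 + \<bar>x\<bar>) ^ max N1 N2 * (1 + \<bar>y\<bar>) ^ max N1 N2 \<and>
        norm (g x y) \<le> (\<bar>C1\<bar> + \<bar>C2\<bar>) * (1 + \<bar>x\<bar>) ^ max N1 N2 * (1 + \<bar>y\<bar>) ^ max N1 N2" for x y
  proof -
    have P: "0 \<le> (1 + \<bar>x\<bar>) ^ max N1 N2 * (1 + \<bar>y\<bar>) ^ max N1 N2" by simp
    have a: "norm (f x y) \<le> \<bar>C1\<bar> * (1 + \<bar>x\<bar>) ^ max N1 N2 * (1 + \<bar>y\<bar>) ^ max N1 N2"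
      by (rule pb_mono_bound[OF 1]) simp
    have b: "norm (g x y) \<le> \<bar>C2\<bar> * (1 + \<bar>x\<bar>) ^ max N1 N2 * (1 + \<bar>y\<bar>) ^ max N1 N2"
      by (rule pb_mono_bound[OF 2]) simp
    have "\<bar>C1\<bar> * ((1 + \<bar>x\<bar>) ^ max N1 N2 * (1 + \<bar>y\<bar>) ^ max N1 N2) \<le> (\<bar>C1\<bar> + \<bar>C2\<bar>) * ((1 + \<bar>x\<bar>) ^ max N1 N2 * (1 + \<bar>y\<bar>) ^ max N1 N2)"
      "\<bar>C2\<bar> * ((1 + \<bar>x\<bar>) ^ max N1 N2 * (1 + \<bar>y\<bar>) ^ max N1 N2) \<le> (\<bar>C1\<bar> + \<bar>C2\<bar>) * ((1 + \<bar>x\<bar>) ^ max N1 N2 * (1 + \<bar>y\<bar>) ^ max N1 N2)"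
      by (intro mult_right_mono P; simp)+
    then show ?thesis using a b by (simp add: mult.assoc)
  qed
  then show ?thesis by blast
qed

lemma pb_add: "pb f \<Longrightarrow> pb g \<Longrightarrow> pb (\<lambda>x y. f x y + g x y)"
proof -
  assume f: "pb f" and g: "pb g"
  obtain C N where CN: "\<And>x y. norm (f x y) \<le> C * (1 + \<bar>x\<bar>) ^ N * (1 + \<bar>y\<bar>) ^ N \<and>
                      norm (g x y) \<le> C * (1 + \<bar>x\<bar>) ^ N * (1 + \<bar>y\<bar>) ^ N"
    using pb_common[OF f g] by blast
  have "norm (f x y + g x y) \<le> (2 * C) * (1 + \<bar>x\<bar>) ^ N * (1 + \<bar>y\<bar>) ^ N" for x y
    using norm_triangle_ineq[of "f x y" "g x y"] CN[of x y] by simp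
  moreover have "continuous_on UNIV (\<lambda>p. f (fst p) (snd p) + g (fst p) (snd p))"
    using f g unfolding pb_def by (intro continuous_intros) auto
  ultimately show ?thesis unfolding pb_def by blast
qed

lemma pb_mult: "pb f \<Longrightarrow> pb g \<Longrightarrow> pb (\<lambda>x y. f x y * g x y)"
proof -
  assume f: "pb f" and g: "pb g"
  obtain C N where CN: "\<And>x y. norm (f x y) \<le> C * (1 + \<bar>x\<bar>) ^ N * (1 + \<bar>y\<bar>) ^ N \<and>
                      norm (g x y) \<le> C * (1 + \<bar>x\<bar>) ^ N * (1 + \<bar>y\<bar>) ^ N"
    using pb_common[OF f g] by blast
  have "norm (f x y * g x y) \<le> (C * C) * (1 + \<bar>x\<bar>) ^ (N + N) * (1 + \<bar>y\<bar>) ^ (N + N)" for x y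
  proof -
    have "norm (f x y * g x y) \<le> (C * (1 + \<bar>x\<bar>) ^ N * (1 + \<bar>y\<bar>) ^ N) * (C * (1 + \<bar>x\<bar>) ^ N * (1 + \<bar>y\<bar>) ^ N)"
      unfolding norm_mult using CN[of x y] by (intro mult_mono) (auto intro: order_trans[OF norm_ge_zero])
    then show ?thesis by (simp add: power_add algebra_simps)
  qed
  moreover have "continuous_on UNIV (\<lambda>p. f (fst p) (snd p) * g (fst p) (snd p))"
    using f g unfolding pb_def by (intro continuous_intros) auto
  ultimately show ?thesis unfolding pb_def by blast
qed

lemma pb_const: "pb (\<lambda>x y. c)"
proof -
  have "norm c \<le> norm c * (1 + \<bar>x\<bar>) ^ 0 * (1 + \<bar>y\<bar>) ^ 0" for x y :: real by simp
  then have "\<exists>C N. \<forall>x y. norm c \<le> C * (1 + \<bar>x::real\<bar>) ^ N * (1 + \<bar>y::real\<bar>) ^ N" by blast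
  then show ?thesis unfolding pb_def by (auto intro: continuous_intros)
qed

lemma pb_cmult: "pb f \<Longrightarrow> pb (\<lambda>x y. c * f x y)"
  using pb_mult[OF pb_const] by blast

lemma pb_diff: "pb f \<Longrightarrow> pb g \<Longrightarrow> pb (\<lambda>x y. f x y - g x y)"
  using pb_add[of f "\<lambda>x y. (-1) * g x y"] pb_cmult[of g "-1"] by simp

lemma pb_x: "pb (\<lambda>x y. complex_of_real x)"
proof -
  have "norm (complex_of_real x) \<le> 1 * (1 + \<bar>x\<bar>) ^ 1 * (1 + \<bar>y\<bar>) ^ 1" for x y :: real
  proof -
    have "\<bar>x\<bar> \<le> (1 + \<bar>x\<bar>) * (1 + \<bar>y\<bar>)" by (simp add: algebra_simps)
    then show ?thesis by simp
  qed
  moreover have "continuous_on UNIV (\<lambda>p::real\<times>real. complex_of_real (fst p))" by (intro continuous_intros)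
  ultimately show ?thesis unfolding pb_def by blast
qed

lemma pb_y: "pb (\<lambda>x y. complex_of_real y)"
proof -
  have "norm (complex_of_real y) \<le> 1 * (1 + \<bar>x\<bar>) ^ 1 * (1 + \<bar>y\<bar>) ^ 1" for x y :: real
  proof -
    have "\<bar>y\<bar> \<le> (1 + \<bar>x\<bar>) * (1 + \<bar>y\<bar>)" by (simp add: algebra_simps)
    then show ?thesis by simp
  qed
  moreover have "continuous_on UNIV (\<lambda>p::real\<times>real. complex_of_real (snd p))" by (intro continuous_intros)
  ultimately show ?thesis unfolding pb_def by blast
qed

lemma continuous_on_hermite [continuous_intros]:
  "continuous_on S f \<Longrightarrow> continuous_on S (\<lambda>x. hermite n (f x))"
  unfolding hermite_def by (intro continuous_intros) auto

lemma pb_herm: "pb (\<lambda>x y. hermite n (u * complex_of_real x + v * complex_of_real y))"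
proof -
  obtain K where K: "\<And>w. norm (hermite n w) \<le> K * (1 + norm w) ^ n" using hermite_bound by blast
  have "norm (hermite n (u * complex_of_real x + v * complex_of_real y)) \<le>
        (\<bar>K\<bar> * (1 + norm u + norm v) ^ n) * (1 + \<bar>x\<bar>) ^ n * (1 + \<bar>y\<bar>) ^ n" for x y
  proof -
    have "norm (u * complex_of_real x + v * complex_of_real y) \<le> norm u * \<bar>x\<bar> + norm v * \<bar>y\<bar>"
      using norm_triangle_ineq[of "u * complex_of_real x" "v * complex_of_real y"] by (simp add: norm_mult)
    also have "\<dots> \<le> (1 + norm u + norm v) * (1 + \<bar>x\<bar>) * (1 + \<bar>y\<bar>) - 1"
      by (simp add: algebra_simps add_nonneg_nonneg mult_nonneg_nonneg add_increasing)
    finally have 1: "1 + norm (u * complex_of_real x + v * complex_of_real y) \<le> (1 + norm u + norm v) * (1 + \<bar>x\<bar>) * (1 + \<bar>y\<bar>)" by simp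
    have "norm (hermite n (u * complex_of_real x + v * complex_of_real y)) \<le> \<bar>K\<bar> * (1 + norm (u * complex_of_real x + v * complex_of_real y)) ^ n"
      using K[of "u * complex_of_real x + v * complex_of_real y"]
      by (smt (verit, best) mult_right_mono norm_ge_zero zero_le_power)
    also have "\<dots> \<le> \<bar>K\<bar> * ((1 + norm u + norm v) * (1 + \<bar>x\<bar>) * (1 + \<bar>y\<bar>)) ^ n"
      by (intro mult_left_mono power_mono 1) auto
    finally show ?thesis by (simp add: power_mult_distrib mult.assoc)
  qed
  moreover have "continuous_on UNIV (\<lambda>p::real\<times>real. hermite n (u * complex_of_real (fst p) + v * complex_of_real (snd p)))"
    by (intro continuous_intros)
  ultimately show ?thesis unfolding pb_def by blast
qed

lemma prod_int:
  fixes f g :: "real \<Rightarrow> real"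
  assumes f: "integrable lborel f" and g: "integrable lborel g"
  shows "integrable (lborel::(real\<times>real) measure) (\<lambda>(x,y). f x * g y)"
proof -
  have [measurable]: "f \<in> borel_measurable borel" "g \<in> borel_measurable borel"
    using f g borel_measurable_integrable by auto
  have "integrable (lborel \<Otimes>\<^sub>M lborel) (\<lambda>(x,y). f x * g y)"
  proof (rule lborel_pair.Fubini_integrable)
    show "(\<lambda>(x,y). f x * g y) \<in> borel_measurable (lborel \<Otimes>\<^sub>M lborel)" by measurable
    have "integrable lborel (\<lambda>x. \<bar>f x\<bar> * (\<integral>y. \<bar>g y\<bar> \<partial>lborel))"
      using f by (intro integrable_mult_left) auto
    then show "integrable lborel (\<lambda>x. \<integral>y. norm ((\<lambda>(x,y). f x * g y) (x, y)) \<partial>lborel)"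
      by (simp add: abs_mult)
    show "AE x in lborel. integrable lborel (\<lambda>y. (\<lambda>(x,y). f x * g y) (x, y))"
      using g by simp
  qed
  then show ?thesis by (simp add: lborel_prod)
qed

lemma norm_Eg: "norm (Eg \<alpha> \<beta> x y) = exp (- Re \<alpha> * x\<^sup>2) * exp (- Re \<beta> * y\<^sup>2)"
  unfolding Eg_def norm_mult norm_gexp ..

lemma continuous_Eg: "continuous_on UNIV (\<lambda>p. Eg \<alpha> \<beta> (fst p) (snd p))"
  unfolding Eg_def by (intro continuous_intros)

lemma pb_int:
  assumes \<alpha>: "Re \<alpha> > 0" and \<beta>: "Re \<beta> > 0" and f: "pb f"
  shows "integrable lborel (\<lambda>(x,y). f x y * Eg \<alpha> \<beta> x y)"
proof -
  obtain C N where CN: "\<And>x y. norm (f x y) \<le> C * (1 + \<bar>x\<bar>) ^ N * (1 + \<bar>y\<bar>) ^ N"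
    using f unfolding pb_def by blast
  show ?thesis
  proof (rule Bochner_Integration.integrable_bound)
    show "integrable lborel (\<lambda>p. C * (case p of (x,y) \<Rightarrow> ((1 + \<bar>x\<bar>) ^ N * exp (- Re \<alpha> * x\<^sup>2)) * ((1 + \<bar>y\<bar>) ^ N * exp (- Re \<beta> * y\<^sup>2))))"
      by (intro integrable_mult_right prod_int gauss_poly_int \<alpha> \<beta>)
    have "continuous_on UNIV (\<lambda>p. f (fst p) (snd p) * Eg \<alpha> \<beta> (fst p) (snd p))"
      using f continuous_Eg unfolding pb_def by (intro continuous_intros) auto
    then show "(\<lambda>(x,y). f x y * Eg \<alpha> \<beta> x y) \<in> borel_measurable lborel"
      unfolding case_prod_beta' by (rule cont_meas)
    show "AE p in lborel. norm (case p of (x,y) \<Rightarrow> f x y * Eg \<alpha> \<beta> x y) \<le>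
       norm (C * (case p of (x,y) \<Rightarrow> ((1 + \<bar>x\<bar>) ^ N * exp (- Re \<alpha> * x\<^sup>2)) * ((1 + \<bar>y\<bar>) ^ N * exp (- Re \<beta> * y\<^sup>2))))"
    proof (intro AE_I2)
      fix p :: "real \<times> real"
      obtain x y where p: "p = (x, y)" by (cases p)
      have "norm (f x y * Eg \<alpha> \<beta> x y) \<le> C * (1 + \<bar>x\<bar>) ^ N * (1 + \<bar>y\<bar>) ^ N * (exp (- Re \<alpha> * x\<^sup>2) * exp (- Re \<beta> * y\<^sup>2))"
        unfolding norm_mult norm_Eg by (intro mult_right_mono CN) auto
      also have "\<dots> \<le> norm (C * (((1 + \<bar>x\<bar>) ^ N * exp (- Re \<alpha> * x\<^sup>2)) * ((1 + \<bar>y\<bar>) ^ N * exp (- Re \<beta> * y\<^sup>2))))"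
        by (simp add: abs_mult algebra_simps)
      finally show "norm (case p of (x,y) \<Rightarrow> f x y * Eg \<alpha> \<beta> x y) \<le>
       norm (C * (case p of (x,y) \<Rightarrow> ((1 + \<bar>x\<bar>) ^ N * exp (- Re \<alpha> * x\<^sup>2)) * ((1 + \<bar>y\<bar>) ^ N * exp (- Re \<beta> * y\<^sup>2))))"
        unfolding p by simp
    qed
  qed
qed

lemma pb_int':
  assumes "Re \<alpha> > 0" "Re \<beta> > 0" "pb f"
  shows "integrable (lborel \<Otimes>\<^sub>M lborel) (\<lambda>(x,y). f x y * Eg \<alpha> \<beta> x y)"
  using pb_int[OF assms] by (simp add: lborel_prod)

lemma II_eq: "II \<alpha> \<beta> f = integral\<^sup>L (lborel \<Otimes>\<^sub>M lborel) (\<lambda>(x,y). f x y * Eg \<alpha> \<beta> x y)"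
  unfolding II_def by (simp add: lborel_prod)

lemma pb_cont_x: "pb f \<Longrightarrow> continuous_on UNIV (\<lambda>x. f x y)"
  unfolding pb_def by (auto intro!: continuous_on_compose2[of UNIV "\<lambda>p. f (fst p) (snd p)" UNIV "\<lambda>x. (x, y)", simplified] continuous_intros)

lemma pb_cont_y: "pb f \<Longrightarrow> continuous_on UNIV (\<lambda>y. f x y)"
  unfolding pb_def by (auto intro!: continuous_on_compose2[of UNIV "\<lambda>p. f (fst p) (snd p)" UNIV "\<lambda>y. (x, y)", simplified] continuous_intros)

lemma ibpx:
  assumes \<alpha>: "Re \<alpha> > 0" and \<beta>: "Re \<beta> > 0" and pf: "pb \<phi>" and pfx: "pb \<phi>x"
    and d: "\<And>x y. ((\<lambda>x. \<phi> x y) has_vector_derivative \<phi>x x y) (at x)"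
  shows "II \<alpha> \<beta> \<phi>x = 2 * \<alpha> * II \<alpha> \<beta> (\<lambda>x y. complex_of_real x * \<phi> x y)"
proof -
  obtain C N where CN: "\<And>x y. norm (\<phi> x y) \<le> C * (1 + \<bar>x\<bar>) ^ N * (1 + \<bar>y\<bar>) ^ N \<and>
                      norm (\<phi>x x y) \<le> C * (1 + \<bar>x\<bar>) ^ N * (1 + \<bar>y\<bar>) ^ N"
    using pb_common[OF pf pfx] by blast
  define e1 where "e1 x = exp (- (\<alpha> * (complex_of_real x)\<^sup>2))" for x
  define e2 where "e2 y = exp (- (\<beta> * (complex_of_real y)\<^sup>2))" for y
  have Eg: "Eg \<alpha> \<beta> x y = e1 x * e2 y" for x y unfolding Eg_def e1_def e2_def ..
  have inner: "(\<integral>x. \<phi>x x y * Eg \<alpha> \<beta> x y \<partial>lborel) = 2 * \<alpha> * (\<integral>x. complex_of_real x * \<phi> x y * Eg \<alpha> \<beta> x y \<partial>lborel)" for y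
  proof -
    have b: "norm (\<phi> x y) \<le> (C * (1 + \<bar>y\<bar>) ^ N) * (1 + \<bar>x\<bar>) ^ N"
      "norm (\<phi>x x y) \<le> (C * (1 + \<bar>y\<bar>) ^ N) * (1 + \<bar>x\<bar>) ^ N" for x
      using CN[of x y] by (simp_all add: algebra_simps)
    have I: "integral\<^sup>L lborel (\<lambda>x. \<phi>x x y * e1 x) = 2 * \<alpha> * integral\<^sup>L lborel (\<lambda>x. complex_of_real x * \<phi> x y * e1 x)"
      unfolding e1_def by (rule ibp1(3)[OF \<alpha> d pb_cont_x[OF pfx] b])
    have "(\<integral>x. \<phi>x x y * Eg \<alpha> \<beta> x y \<partial>lborel) = (\<integral>x. (\<phi>x x y * e1 x) * e2 y \<partial>lborel)"
      unfolding Eg by (simp add: mult.assoc)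
    also have "\<dots> = integral\<^sup>L lborel (\<lambda>x. \<phi>x x y * e1 x) * e2 y"
      by (rule integral_mult_left_zero)
    also have "\<dots> = 2 * \<alpha> * (integral\<^sup>L lborel (\<lambda>x. complex_of_real x * \<phi> x y * e1 x) * e2 y)"
      unfolding I by simp
    also have "integral\<^sup>L lborel (\<lambda>x. complex_of_real x * \<phi> x y * e1 x) * e2 y = (\<integral>x. (complex_of_real x * \<phi> x y * e1 x) * e2 y \<partial>lborel)"
      by (rule integral_mult_left_zero[symmetric])
    also have "\<dots> = (\<integral>x. complex_of_real x * \<phi> x y * Eg \<alpha> \<beta> x y \<partial>lborel)"
      unfolding Eg by (simp add: mult.assoc)
    finally show ?thesis .
  qed
  have "II \<alpha> \<beta> \<phi>x = (\<integral>y. (\<integral>x. \<phi>x x y * Eg \<alpha> \<beta> x y \<partial>lborel) \<partial>lborel)"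
    unfolding II_eq using lborel_pair.integral_snd[OF pb_int'[OF \<alpha> \<beta> pfx]] by simp
  also have "\<dots> = (\<integral>y. 2 * \<alpha> * (\<integral>x. complex_of_real x * \<phi> x y * Eg \<alpha> \<beta> x y \<partial>lborel) \<partial>lborel)"
    unfolding inner ..
  also have "\<dots> = 2 * \<alpha> * (\<integral>y. (\<integral>x. complex_of_real x * \<phi> x y * Eg \<alpha> \<beta> x y \<partial>lborel) \<partial>lborel)"
    by simp
  also have "(\<integral>y. (\<integral>x. complex_of_real x * \<phi> x y * Eg \<alpha> \<beta> x y \<partial>lborel) \<partial>lborel) = II \<alpha> \<beta> (\<lambda>x y. complex_of_real x * \<phi> x y)"
    unfolding II_eq using lborel_pair.integral_snd[OF pb_int'[OF \<alpha> \<beta> pb_mult[OF pb_x pf]]] by simp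
  finally show ?thesis .
qed

lemma ibpy:
  assumes \<alpha>: "Re \<alpha> > 0" and \<beta>: "Re \<beta> > 0" and pf: "pb \<phi>" and pfy: "pb \<phi>y"
    and d: "\<And>x y. ((\<lambda>y. \<phi> x y) has_vector_derivative \<phi>y x y) (at y)"
  shows "II \<alpha> \<beta> \<phi>y = 2 * \<beta> * II \<alpha> \<beta> (\<lambda>x y. complex_of_real y * \<phi> x y)"
proof -
  obtain C N where CN: "\<And>x y. norm (\<phi> x y) \<le> C * (1 + \<bar>x\<bar>) ^ N * (1 + \<bar>y\<bar>) ^ N \<and>
                      norm (\<phi>y x y) \<le> C * (1 + \<bar>x\<bar>) ^ N * (1 + \<bar>y\<bar>) ^ N"
    using pb_common[OF pf pfy] by blast
  define e1 where "e1 x = exp (- (\<alpha> * (complex_of_real x)\<^sup>2))" for x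
  define e2 where "e2 y = exp (- (\<beta> * (complex_of_real y)\<^sup>2))" for y
  have Eg: "Eg \<alpha> \<beta> x y = e1 x * e2 y" for x y unfolding Eg_def e1_def e2_def ..
  have inner: "(\<integral>y. \<phi>y x y * Eg \<alpha> \<beta> x y \<partial>lborel) = 2 * \<beta> * (\<integral>y. complex_of_real y * \<phi> x y * Eg \<alpha> \<beta> x y \<partial>lborel)" for x
  proof -
    have b: "norm (\<phi> x y) \<le> (C * (1 + \<bar>x\<bar>) ^ N) * (1 + \<bar>y\<bar>) ^ N"
      "norm (\<phi>y x y) \<le> (C * (1 + \<bar>x\<bar>) ^ N) * (1 + \<bar>y\<bar>) ^ N" for y
      using CN[of x y] by (simp_all add: algebra_simps)
    have I: "integral\<^sup>L lborel (\<lambda>y. \<phi>y x y * e2 y) = 2 * \<beta> * integral\<^sup>L lborel (\<lambda>y. complex_of_real y * \<phi> x y * e2 y)"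
      unfolding e2_def by (rule ibp1(3)[OF \<beta> d pb_cont_y[OF pfy] b])
    have "(\<integral>y. \<phi>y x y * Eg \<alpha> \<beta> x y \<partial>lborel) = (\<integral>y. (\<phi>y x y * e2 y) * e1 x \<partial>lborel)"
      unfolding Eg by (simp add: algebra_simps)
    also have "\<dots> = integral\<^sup>L lborel (\<lambda>y. \<phi>y x y * e2 y) * e1 x"
      by (rule integral_mult_left_zero)
    also have "\<dots> = 2 * \<beta> * (integral\<^sup>L lborel (\<lambda>y. complex_of_real y * \<phi> x y * e2 y) * e1 x)"
      unfolding I by simp
    also have "integral\<^sup>L lborel (\<lambda>y. complex_of_real y * \<phi> x y * e2 y) * e1 x = (\<integral>y. (complex_of_real y * \<phi> x y * e2 y) * e1 x \<partial>lborel)"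
      by (rule integral_mult_left_zero[symmetric])
    also have "\<dots> = (\<integral>y. complex_of_real y * \<phi> x y * Eg \<alpha> \<beta> x y \<partial>lborel)"
      unfolding Eg by (simp add: algebra_simps)
    finally show ?thesis .
  qed
  have "II \<alpha> \<beta> \<phi>y = (\<integral>x. (\<integral>y. \<phi>y x y * Eg \<alpha> \<beta> x y \<partial>lborel) \<partial>lborel)"
    unfolding II_eq using lborel_pair.integral_fst[OF pb_int'[OF \<alpha> \<beta> pfy]] by simp
  also have "\<dots> = (\<integral>x. 2 * \<beta> * (\<integral>y. complex_of_real y * \<phi> x y * Eg \<alpha> \<beta> x y \<partial>lborel) \<partial>lborel)"
    unfolding inner ..
  also have "\<dots> = 2 * \<beta> * (\<integral>x. (\<integral>y. complex_of_real y * \<phi> x y * Eg \<alpha> \<beta> x y \<partial>lborel) \<partial>lborel)"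
    by simp
  also have "(\<integral>x. (\<integral>y. complex_of_real y * \<phi> x y * Eg \<alpha> \<beta> x y \<partial>lborel) \<partial>lborel) = II \<alpha> \<beta> (\<lambda>x y. complex_of_real y * \<phi> x y)"
    unfolding II_eq using lborel_pair.integral_fst[OF pb_int'[OF \<alpha> \<beta> pb_mult[OF pb_y pf]]] by simp
  finally show ?thesis .
qed

lemma II_add: "Re \<alpha> > 0 \<Longrightarrow> Re \<beta> > 0 \<Longrightarrow> pb f \<Longrightarrow> pb g \<Longrightarrow> II \<alpha> \<beta> (\<lambda>x y. f x y + g x y) = II \<alpha> \<beta> f + II \<alpha> \<beta> g"
  unfolding II_def using pb_int[of \<alpha> \<beta> f] pb_int[of \<alpha> \<beta> g]
  by (simp add: distrib_right case_prod_beta')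

lemma II_cmult: "II \<alpha> \<beta> (\<lambda>x y. u * f x y) = u * II \<alpha> \<beta> f"
  unfolding II_def by (simp add: mult.assoc case_prod_beta')

lemma II_diff: "Re \<alpha> > 0 \<Longrightarrow> Re \<beta> > 0 \<Longrightarrow> pb f \<Longrightarrow> pb g \<Longrightarrow> II \<alpha> \<beta> (\<lambda>x y. f x y - g x y) = II \<alpha> \<beta> f - II \<alpha> \<beta> g"
  unfolding II_def using pb_int[of \<alpha> \<beta> f] pb_int[of \<alpha> \<beta> g]
  by (simp add: left_diff_distrib case_prod_beta')

lemma hermite_Suc: "hermite (Suc n) w = 2 * w * hermite n w - 2 * of_nat n * hermite (n - 1) w"
  by (cases n) (simp_all add: hermite_rec)

lemma alg1:
  fixes a b cc L K u v :: complex
  assumes ab: "a - b \<noteq> 0" "a + b \<noteq> 0" and b: "b \<noteq> 0" and cc: "cc = (a\<^sup>2 - b\<^sup>2) / (2 * b)"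
  shows "2 * cc * (L * u + K * v) / (a - b) - 2 * cc * (L * u - K * v) / (a + b) - 2 * L * u = 2 * a / b * K * v"
    "2 * cc * (L * u + K * v) / (a - b) + 2 * cc * (L * u - K * v) / (a + b) - 2 * K * v = 2 * a / b * L * u"
proof -
  have e: "cc = (a - b) * (a + b) / (2 * b)" unfolding cc by (simp add: power2_eq_square algebra_simps)
  have nz: "a * (b * 2) + b * (b * 2) \<noteq> 0"
  proof -
    have "a * (b * 2) + b * (b * 2) = 2 * b * (a + b)" by (simp add: algebra_simps)
    then show ?thesis using ab b by simp
  qed
  have 1: "2 * cc * (L * u + K * v) / (a - b) = (a + b) * (L * u + K * v) / b"
    unfolding e using ab b by (simp add: field_simps)
  have 2: "2 * cc * (L * u - K * v) / (a + b) = (a - b) * (L * u - K * v) / b"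
    unfolding e using ab b nz by (simp add: field_simps)
  show "2 * cc * (L * u + K * v) / (a - b) - 2 * cc * (L * u - K * v) / (a + b) - 2 * L * u = 2 * a / b * K * v"
    "2 * cc * (L * u + K * v) / (a - b) + 2 * cc * (L * u - K * v) / (a + b) - 2 * K * v = 2 * a / b * L * u"
    unfolding 1 2 using b by (simp_all add: field_simps)
qed

context
  fixes a b c :: complex
  assumes \<alpha>: "Re (a - b) > 0" and \<beta>: "Re (a + b) > 0" and b0: "b \<noteq> 0"
    and c2: "c\<^sup>2 = (a\<^sup>2 - b\<^sup>2) / (2 * b)"
begin

definition P :: "nat \<Rightarrow> nat \<Rightarrow> real \<Rightarrow> real \<Rightarrow> complex" where
  "P l k x y = hermite l (c * complex_of_real x + (\<i> * c) * complex_of_real y) *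
               hermite k (c * complex_of_real x + (- \<i> * c) * complex_of_real y)"

definition I :: "nat \<Rightarrow> nat \<Rightarrow> complex" where
  "I l k = II (a - b) (a + b) (P l k)"

lemma pbP: "pb (P l k)"
  unfolding P_def by (intro pb_mult pb_herm)

lemma P_dx: "((\<lambda>x. P l k x y) has_vector_derivative
   (2 * of_nat l * c * P (l - 1) k x y + 2 * of_nat k * c * P l (k - 1) x y)) (at x)"
proof -
  have "((\<lambda>w. hermite l (c * w + (\<i> * c) * complex_of_real y) * hermite k (c * w + (- \<i> * c) * complex_of_real y))
    has_field_derivative (2 * of_nat l * c * P (l - 1) k x y + 2 * of_nat k * c * P l (k - 1) x y)) (at (complex_of_real x))"
    unfolding P_def by (auto intro!: derivative_eq_intros simp: algebra_simps)
  from has_vector_derivative_real_field[OF this] show ?thesis unfolding P_def .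
qed

lemma P_dy: "((\<lambda>y. P l k x y) has_vector_derivative
   (2 * of_nat l * (\<i> * c) * P (l - 1) k x y - 2 * of_nat k * (\<i> * c) * P l (k - 1) x y)) (at y)"
proof -
  have "((\<lambda>w. hermite l (c * complex_of_real x + (\<i> * c) * w) * hermite k (c * complex_of_real x + (- \<i> * c) * w))
    has_field_derivative (2 * of_nat l * (\<i> * c) * P (l - 1) k x y - 2 * of_nat k * (\<i> * c) * P l (k - 1) x y)) (at (complex_of_real y))"
    unfolding P_def by (auto intro!: derivative_eq_intros simp: algebra_simps)
  from has_vector_derivative_real_field[OF this] show ?thesis unfolding P_def .
qed

lemma Ix: "2 * (a - b) * II (a - b) (a + b) (\<lambda>x y. complex_of_real x * P l k x y) =
     2 * of_nat l * c * I (l - 1) k + 2 * of_nat k * c * I l (k - 1)"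
proof -
  have "II (a - b) (a + b) (\<lambda>x y. 2 * of_nat l * c * P (l - 1) k x y + 2 * of_nat k * c * P l (k - 1) x y)
      = 2 * (a - b) * II (a - b) (a + b) (\<lambda>x y. complex_of_real x * P l k x y)"
    by (rule ibpx[OF \<alpha> \<beta> pbP _ P_dx]) (intro pb_add pb_cmult pbP)
  moreover have "II (a - b) (a + b) (\<lambda>x y. 2 * of_nat l * c * P (l - 1) k x y + 2 * of_nat k * c * P l (k - 1) x y)
      = 2 * of_nat l * c * I (l - 1) k + 2 * of_nat k * c * I l (k - 1)"
    unfolding I_def by (subst II_add[OF \<alpha> \<beta>]) (auto intro: pb_cmult pbP simp: II_cmult)
  ultimately show ?thesis by simp
qed

lemma Iy: "2 * (a + b) * II (a - b) (a + b) (\<lambda>x y. complex_of_real y * P l k x y) =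
     2 * of_nat l * (\<i> * c) * I (l - 1) k - 2 * of_nat k * (\<i> * c) * I l (k - 1)"
proof -
  have "II (a - b) (a + b) (\<lambda>x y. 2 * of_nat l * (\<i> * c) * P (l - 1) k x y - 2 * of_nat k * (\<i> * c) * P l (k - 1) x y)
      = 2 * (a + b) * II (a - b) (a + b) (\<lambda>x y. complex_of_real y * P l k x y)"
    by (rule ibpy[OF \<alpha> \<beta> pbP _ P_dy]) (intro pb_diff pb_cmult pbP)
  moreover have "II (a - b) (a + b) (\<lambda>x y. 2 * of_nat l * (\<i> * c) * P (l - 1) k x y - 2 * of_nat k * (\<i> * c) * P l (k - 1) x y)
      = 2 * of_nat l * (\<i> * c) * I (l - 1) k - 2 * of_nat k * (\<i> * c) * I l (k - 1)"
    unfolding I_def by (subst II_diff[OF \<alpha> \<beta>]) (auto intro: pb_cmult pbP simp: II_cmult)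
  ultimately show ?thesis by simp
qed

lemma ab_nz: "a - b \<noteq> 0" "a + b \<noteq> 0"
proof -
  show "a - b \<noteq> 0" "a + b \<noteq> 0" using \<alpha> \<beta> by (auto simp: complex_eq_iff)
qed

lemma I_Suc_l: "I (Suc l) k = 2 * a / b * of_nat k * I l (k - 1)"
proof -
  let ?X = "II (a - b) (a + b) (\<lambda>x y. complex_of_real x * P l k x y)"
  let ?Y = "II (a - b) (a + b) (\<lambda>x y. complex_of_real y * P l k x y)"
  have PS: "P (Suc l) k x y = 2 * c * (complex_of_real x * P l k x y) + 2 * (\<i> * c) * (complex_of_real y * P l k x y)
            - 2 * of_nat l * P (l - 1) k x y" for x y
    unfolding P_def hermite_Suc[of l] by (simp add: algebra_simps)
  have "I (Suc l) k = II (a - b) (a + b) (\<lambda>x y. 2 * c * (complex_of_real x * P l k x y) + 2 * (\<i> * c) * (complex_of_real y * P l k x y)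
            - 2 * of_nat l * P (l - 1) k x y)"
    unfolding I_def PS ..
  also have "\<dots> = 2 * c * ?X + 2 * (\<i> * c) * ?Y - 2 * of_nat l * I (l - 1) k"
    unfolding I_def
    by (subst II_diff[OF \<alpha> \<beta>], (intro pb_add pb_cmult pb_mult pb_x pb_y pbP)+,
        subst II_add[OF \<alpha> \<beta>], (intro pb_add pb_cmult pb_mult pb_x pb_y pbP)+) (simp add: II_cmult)
  also have "\<dots> = 2 * a / b * of_nat k * I l (k - 1)"
  proof -
    have X: "?X = c * (of_nat l * I (l - 1) k + of_nat k * I l (k - 1)) / (a - b)"
    proof -
      have "2 * ((a - b) * ?X) = 2 * (c * (of_nat l * I (l - 1) k + of_nat k * I l (k - 1)))"
        using Ix[of l k] by (simp add: algebra_simps)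
      then have "(a - b) * ?X = c * (of_nat l * I (l - 1) k + of_nat k * I l (k - 1))" by simp
      then show ?thesis using ab_nz by (simp add: eq_divide_eq mult.commute)
    qed
    have Y: "?Y = \<i> * c * (of_nat l * I (l - 1) k - of_nat k * I l (k - 1)) / (a + b)"
    proof -
      have "2 * ((a + b) * ?Y) = 2 * (\<i> * c * (of_nat l * I (l - 1) k - of_nat k * I l (k - 1)))"
        using Iy[of l k] by (simp add: algebra_simps)
      then have "(a + b) * ?Y = \<i> * c * (of_nat l * I (l - 1) k - of_nat k * I l (k - 1))" by simp
      then show ?thesis using ab_nz by (simp add: eq_divide_eq mult.commute)
    qed
    have "2 * c * ?X + 2 * (\<i> * c) * ?Y - 2 * of_nat l * I (l - 1) k =
      2 * (c * c) * (of_nat l * I (l - 1) k + of_nat k * I l (k - 1)) / (a - b) -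
      2 * (c * c) * (of_nat l * I (l - 1) k - of_nat k * I l (k - 1)) / (a + b) - 2 * of_nat l * I (l - 1) k"
      unfolding X Y by (simp add: algebra_simps) (simp add: add_divide_distrib[symmetric])
    also have "\<dots> = 2 * a / b * of_nat k * I l (k - 1)"
      by (rule alg1(1)[OF ab_nz b0]) (use c2 in \<open>simp add: power2_eq_square\<close>)
    finally show ?thesis .
  qed
  finally show ?thesis .
qed

lemma I_Suc_k: "I l (Suc k) = 2 * a / b * of_nat l * I (l - 1) k"
proof -
  let ?X = "II (a - b) (a + b) (\<lambda>x y. complex_of_real x * P l k x y)"
  let ?Y = "II (a - b) (a + b) (\<lambda>x y. complex_of_real y * P l k x y)"
  have PS: "P l (Suc k) x y = 2 * c * (complex_of_real x * P l k x y) - 2 * (\<i> * c) * (complex_of_real y * P l k x y)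
            - 2 * of_nat k * P l (k - 1) x y" for x y
    unfolding P_def hermite_Suc[of k] by (simp add: algebra_simps)
  have "I l (Suc k) = II (a - b) (a + b) (\<lambda>x y. 2 * c * (complex_of_real x * P l k x y) - 2 * (\<i> * c) * (complex_of_real y * P l k x y)
            - 2 * of_nat k * P l (k - 1) x y)"
    unfolding I_def PS ..
  also have "\<dots> = 2 * c * ?X - 2 * (\<i> * c) * ?Y - 2 * of_nat k * I l (k - 1)"
    unfolding I_def
    by (subst II_diff[OF \<alpha> \<beta>], (intro pb_diff pb_cmult pb_mult pb_x pb_y pbP)+,
        subst II_diff[OF \<alpha> \<beta>], (intro pb_add pb_cmult pb_mult pb_x pb_y pbP)+) (simp add: II_cmult)
  also have "\<dots> = 2 * a / b * of_nat l * I (l - 1) k"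
  proof -
    have X: "?X = c * (of_nat l * I (l - 1) k + of_nat k * I l (k - 1)) / (a - b)"
    proof -
      have "2 * ((a - b) * ?X) = 2 * (c * (of_nat l * I (l - 1) k + of_nat k * I l (k - 1)))"
        using Ix[of l k] by (simp add: algebra_simps)
      then have "(a - b) * ?X = c * (of_nat l * I (l - 1) k + of_nat k * I l (k - 1))" by simp
      then show ?thesis using ab_nz by (simp add: eq_divide_eq mult.commute)
    qed
    have Y: "?Y = \<i> * c * (of_nat l * I (l - 1) k - of_nat k * I l (k - 1)) / (a + b)"
    proof -
      have "2 * ((a + b) * ?Y) = 2 * (\<i> * c * (of_nat l * I (l - 1) k - of_nat k * I l (k - 1)))"
        using Iy[of l k] by (simp add: algebra_simps)
      then have "(a + b) * ?Y = \<i> * c * (of_nat l * I (l - 1) k - of_nat k * I l (k - 1))" by simp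
      then show ?thesis using ab_nz by (simp add: eq_divide_eq mult.commute)
    qed
    have "2 * c * ?X - 2 * (\<i> * c) * ?Y - 2 * of_nat k * I l (k - 1) =
      2 * (c * c) * (of_nat l * I (l - 1) k + of_nat k * I l (k - 1)) / (a - b) +
      2 * (c * c) * (of_nat l * I (l - 1) k - of_nat k * I l (k - 1)) / (a + b) - 2 * of_nat k * I l (k - 1)"
      unfolding X Y by (simp add: algebra_simps) (simp add: add_divide_distrib[symmetric])
    also have "\<dots> = 2 * a / b * of_nat l * I (l - 1) k"
      by (rule alg1(2)[OF ab_nz b0]) (use c2 in \<open>simp add: power2_eq_square\<close>)
    finally show ?thesis .
  qed
  finally show ?thesis .
qed

lemma I_formula: "I l k = (if l = k then of_nat (fact k) * (2 * a / b) ^ k * I 0 0 else 0)"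
proof (induction l arbitrary: k)
  case 0
  then show ?case by (cases k) (simp_all add: I_Suc_k)
next
  case (Suc l)
  then show ?case by (cases k) (simp_all add: I_Suc_l algebra_simps)
qed

end

lemma exp_decay:
  fixes p :: real
  assumes "p > 0"
  shows "((\<lambda>x::real. exp (- p * x\<^sup>2)) \<longlongrightarrow> 0) at_top" "((\<lambda>x::real. exp (- p * x\<^sup>2)) \<longlongrightarrow> 0) at_bot"
  using gauss_decay[OF assms, of 0] by simp_all

lemma gexp_lim0:
  assumes "Re \<kappa> > 0"
  shows "((\<lambda>x::real. exp (- (\<kappa> * (complex_of_real x)\<^sup>2))) \<longlongrightarrow> 0) at_top"
    "((\<lambda>x::real. exp (- (\<kappa> * (complex_of_real x)\<^sup>2))) \<longlongrightarrow> 0) at_bot"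
proof -
  have L: "((\<lambda>x::real. exp (- Re \<kappa> * x\<^sup>2)) \<longlongrightarrow> 0) at_top" "((\<lambda>x::real. exp (- Re \<kappa> * x\<^sup>2)) \<longlongrightarrow> 0) at_bot"
    using exp_decay[of "Re \<kappa>"] assms by auto
  have n: "(\<lambda>x::real. norm (exp (- (\<kappa> * (complex_of_real x)\<^sup>2)))) = (\<lambda>x. exp (- Re \<kappa> * x\<^sup>2))"
    by (simp only: norm_gexp)
  show "((\<lambda>x::real. exp (- (\<kappa> * (complex_of_real x)\<^sup>2))) \<longlongrightarrow> 0) at_top"
    by (rule tendsto_norm_zero_cancel) (unfold n, rule L(1))
  show "((\<lambda>x::real. exp (- (\<kappa> * (complex_of_real x)\<^sup>2))) \<longlongrightarrow> 0) at_bot"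
    by (rule tendsto_norm_zero_cancel) (unfold n, rule L(2))
qed

lemma abs_gauss:
  assumes \<kappa>: "Re \<kappa> > 0"
  shows "integrable lborel (\<lambda>x. complex_of_real \<bar>x\<bar> * exp (- (\<kappa> * (complex_of_real x)\<^sup>2)))"
    "integral\<^sup>L lborel (\<lambda>x. complex_of_real \<bar>x\<bar> * exp (- (\<kappa> * (complex_of_real x)\<^sup>2))) = 1 / \<kappa>"
proof -
  define f where "f x = complex_of_real \<bar>x\<bar> * exp (- (\<kappa> * (complex_of_real x)\<^sup>2))" for x
  have k0: "\<kappa> \<noteq> 0" using \<kappa> by auto
  have k2: "2 * \<kappa> \<noteq> 0" using k0 by simp
  show fi: "integrable lborel f"
  proof (rule Bochner_Integration.integrable_bound)
    show "integrable lborel (\<lambda>x. (1 + \<bar>x\<bar>) ^ 1 * exp (- Re \<kappa> * x\<^sup>2))"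
      by (rule gauss_poly_int) (use \<kappa> in auto)
    show "f \<in> borel_measurable lborel" unfolding f_def by (intro cont_meas continuous_intros)
    show "AE x in lborel. norm (f x) \<le> norm ((1 + \<bar>x\<bar>) ^ 1 * exp (- Re \<kappa> * x\<^sup>2))"
      by (intro AE_I2) (simp add: f_def norm_mult norm_gexp mult_right_mono)
  qed
  have cf: "isCont f x" for x unfolding f_def by (intro continuous_intros)
  define F1 where "F1 x = exp (- (\<kappa> * (complex_of_real x)\<^sup>2)) / (2 * \<kappa>)" for x
  define F2 where "F2 x = - exp (- (\<kappa> * (complex_of_real x)\<^sup>2)) / (2 * \<kappa>)" for x
  have dF1: "(F1 has_vector_derivative f x) (at x)" if "x < 0" for x
  proof -
    have "(F1 has_vector_derivative (- (2 * \<kappa> * complex_of_real x) * exp (- (\<kappa> * (complex_of_real x)\<^sup>2))) / (2 * \<kappa>)) (at x)"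
      unfolding F1_def by (intro has_vector_derivative_divide gexp_deriv)
    moreover have "(- (2 * \<kappa> * complex_of_real x) * exp (- (\<kappa> * (complex_of_real x)\<^sup>2))) / (2 * \<kappa>) = f x"
      using that k0 unfolding f_def by (simp add: field_simps k2)
    ultimately show ?thesis by simp
  qed
  have dF2: "(F2 has_vector_derivative f x) (at x)" if "x > 0" for x
  proof -
    have "(F2 has_vector_derivative - ((- (2 * \<kappa> * complex_of_real x) * exp (- (\<kappa> * (complex_of_real x)\<^sup>2))) / (2 * \<kappa>))) (at x)"
      unfolding F2_def minus_divide_left[symmetric] by (intro has_vector_derivative_divide has_vector_derivative_minus gexp_deriv)
    moreover have "- ((- (2 * \<kappa> * complex_of_real x) * exp (- (\<kappa> * (complex_of_real x)\<^sup>2))) / (2 * \<kappa>)) = f x"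
      using that k0 unfolding f_def by (simp add: field_simps k2)
    ultimately show ?thesis by simp
  qed
  have cF1: "isCont F1 x" for x unfolding F1_def using k2 by (intro continuous_intros)
  have cF2: "isCont F2 x" for x unfolding F2_def using k2 by (intro continuous_intros)
  have L1: "(LBINT x=-\<infinity>..0. f x) = 1 / (2 * \<kappa>) - 0"
  proof (rule interval_integral_FTC_integrable)
    show "set_integrable lborel (einterval (-\<infinity>) 0) f"
      using fi unfolding set_integrable_def by (intro integrable_mult_indicator) auto
    show "((F1 \<circ> real_of_ereal) \<longlongrightarrow> 0) (at_right (-\<infinity>))"
      unfolding ereal_tendsto_simps F1_def using tendsto_divide_zero[OF gexp_lim0(2)[OF \<kappa>], of "2 * \<kappa>"] by simp
    have "(F1 \<longlongrightarrow> F1 0) (at_left 0)" using cF1[of 0] unfolding isCont_def filterlim_at_split by auto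
    then show "((F1 \<circ> real_of_ereal) \<longlongrightarrow> 1 / (2 * \<kappa>)) (at_left 0)"
      unfolding zero_ereal_def ereal_tendsto_simps F1_def by simp
      show "-\<infinity> < (0::ereal)" by simp
    show "(F1 has_vector_derivative f x) (at x)" if "-\<infinity> < ereal x" "ereal x < 0" for x
      using that by (intro dF1) (simp add: zero_ereal_def)
    show "isCont f x" for x by (rule cf)
  qed
  have L2: "(LBINT x=0..\<infinity>. f x) = 0 - (- 1 / (2 * \<kappa>))"
  proof (rule interval_integral_FTC_integrable)
    show "set_integrable lborel (einterval 0 \<infinity>) f"
      using fi unfolding set_integrable_def by (intro integrable_mult_indicator) auto
    show "((F2 \<circ> real_of_ereal) \<longlongrightarrow> 0) (at_left \<infinity>)"
      unfolding ereal_tendsto_simps F2_def using tendsto_divide_zero[OF tendsto_minus[OF gexp_lim0(1)[OF \<kappa>], simplified], of "2 * \<kappa>"] by simp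
    have "(F2 \<longlongrightarrow> F2 0) (at_right 0)" using cF2[of 0] unfolding isCont_def filterlim_at_split by auto
    then show "((F2 \<circ> real_of_ereal) \<longlongrightarrow> - 1 / (2 * \<kappa>)) (at_right 0)"
      unfolding zero_ereal_def ereal_tendsto_simps F2_def by simp
      show "(0::ereal) < \<infinity>" by simp
    show "(F2 has_vector_derivative f x) (at x)" if "0 < ereal x" "ereal x < \<infinity>" for x
      using that by (intro dF2) (simp add: zero_ereal_def)
    show "isCont f x" for x by (rule cf)
  qed
  have "(LBINT x=-\<infinity>..0. f x) + (LBINT x=0..\<infinity>. f x) = (LBINT x=-\<infinity>..\<infinity>. f x)"
    by (rule interval_integral_sum) (use fi in \<open>simp add: interval_lebesgue_integrable_def set_integrable_def\<close>)
  also have "(LBINT x=-\<infinity>..\<infinity>. f x) = integral\<^sup>L lborel f"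
    by (simp add: interval_lebesgue_integral_def set_lebesgue_integral_def)
  finally show "integral\<^sup>L lborel f = 1 / \<kappa>" unfolding L1 L2 using k0 by (simp add: field_simps)
qed

lemma csqrt_re_gt:
  assumes "Re z > 0"
  shows "Re (csqrt z) > \<bar>Im (csqrt z)\<bar>"
proof -
  define w where "w = csqrt z"
  have "Re z = Re (w\<^sup>2)" by (simp add: w_def)
  also have "\<dots> = (Re w)\<^sup>2 - (Im w)\<^sup>2" by (simp add: power2_eq_square)
  finally have "Re z = (Re w)\<^sup>2 - (Im w)\<^sup>2" .
  then have "\<bar>Im w\<bar>\<^sup>2 < (Re w)\<^sup>2" using assms by simp
  moreover have "Re w \<ge> 0" unfolding w_def by (rule Re_csqrt)
  ultimately show ?thesis unfolding w_def[symmetric] by (rule power_less_imp_less_base)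
qed

lemma notnp:
  assumes r: "Re r > \<bar>Im r\<bar>" and q: "Re q > \<bar>Im q\<bar>"
  shows "r + \<i> * q * complex_of_real s \<notin> \<real>\<^sub>\<le>\<^sub>0"
proof
  assume "r + \<i> * q * complex_of_real s \<in> \<real>\<^sub>\<le>\<^sub>0"
  then have im: "Im r + Re q * s = 0" and re: "Re r - Im q * s \<le> 0"
    by (auto simp: complex_nonpos_Reals_iff)
  have "\<bar>Im r\<bar> * \<bar>Im q\<bar> < Re r * Re q"
    using r q by (intro mult_strict_mono) auto
  moreover have "- (Im q * Im r) \<le> \<bar>Im r\<bar> * \<bar>Im q\<bar>"
    by (metis abs_ge_minus_self abs_mult mult.commute)
  moreover have "Re q * (Re r - Im q * s) = Re r * Re q + Im q * Im r"
  proof -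
    have e: "Re q * s = - Im r" using im by linarith
    have "Re q * (Re r - Im q * s) = Re r * Re q - Im q * (Re q * s)" by (simp add: algebra_simps)
    also have "\<dots> = Re r * Re q + Im q * Im r" unfolding e by simp
    finally show ?thesis .
  qed
  moreover have "Re q * (Re r - Im q * s) \<le> 0"
    using re q by (simp add: mult_nonneg_nonpos)
  ultimately show False by linarith
qed

lemma Ln_iq:
  assumes q: "Re q > 0"
  shows "Ln (\<i> * q) = Ln q + \<i> * of_real (pi / 2)" "Ln (- \<i> * q) = Ln q - \<i> * of_real (pi / 2)"
proof -
  have q0: "q \<noteq> 0" using q by auto
  have im: "\<bar>Im (Ln q)\<bar> < pi / 2" using Re_Ln_pos_lt_imp[OF q] .
  have "exp (Ln q + \<i> * of_real (pi / 2)) = \<i> * q"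
  proof -
    have "exp (\<i> * complex_of_real (pi / 2)) = \<i>" by (metis cis_conv_exp cis_pi_half)
    then show ?thesis using q0 by (simp add: exp_add mult.commute)
  qed
  moreover have "Ln (exp (Ln q + \<i> * of_real (pi / 2))) = Ln q + \<i> * of_real (pi / 2)"
    by (rule Ln_exp) (use im in auto)
  ultimately show "Ln (\<i> * q) = Ln q + \<i> * of_real (pi / 2)" by simp
  have "exp (Ln q - \<i> * of_real (pi / 2)) = - \<i> * q"
  proof -
    have e: "exp (\<i> * complex_of_real (- (pi / 2))) = - \<i>" by (metis cis_conv_exp cis_minus_pi_half)
    have "Ln q - \<i> * of_real (pi / 2) = Ln q + \<i> * complex_of_real (- (pi / 2))" by simp
    then have "exp (Ln q - \<i> * of_real (pi / 2)) = exp (Ln q) * exp (\<i> * complex_of_real (- (pi / 2)))"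
      by (simp only: exp_add)
    then show ?thesis using q0 unfolding e by simp
  qed
  moreover have "Ln (exp (Ln q - \<i> * of_real (pi / 2))) = Ln q - \<i> * of_real (pi / 2)"
    by (rule Ln_exp) (use im in auto)
  ultimately show "Ln (- \<i> * q) = Ln q - \<i> * of_real (pi / 2)" by simp
qed

lemma Ln_diff_lim:
  assumes r: "Re r > \<bar>Im r\<bar>" and q: "Re q > \<bar>Im q\<bar>"
  shows "((\<lambda>s::real. Ln (r + \<i> * q * complex_of_real s) - Ln (r + \<i> * q * complex_of_real (- s))) \<longlongrightarrow> \<i> * of_real pi) at_top"
proof -
  have q0: "Re q > 0" using q by linarith
  have inz: "\<i> * q + r * complex_of_real (1 / s) \<noteq> 0" "- \<i> * q + r * complex_of_real (1 / s) \<noteq> 0" if "s > 0" for s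
  proof -
    have "complex_of_real s * (\<i> * q + r * complex_of_real (1 / s)) = r + \<i> * q * complex_of_real s"
      using that by (simp add: algebra_simps)
    moreover have "r + \<i> * q * complex_of_real s \<noteq> 0" using notnp[OF r q, of s] by auto
    ultimately show "\<i> * q + r * complex_of_real (1 / s) \<noteq> 0" by auto
    have "complex_of_real s * (- \<i> * q + r * complex_of_real (1 / s)) = r + \<i> * q * complex_of_real (- s)"
      using that by (simp add: algebra_simps)
    moreover have "r + \<i> * q * complex_of_real (- s) \<noteq> 0" using notnp[OF r q, of "-s"] by auto
    ultimately show "- \<i> * q + r * complex_of_real (1 / s) \<noteq> 0" by auto
  qed
  have ev: "\<forall>\<^sub>F s in at_top. Ln (\<i> * q + r * complex_of_real (1 / s)) - Ln (- \<i> * q + r * complex_of_real (1 / s)) =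
         Ln (r + \<i> * q * complex_of_real s) - Ln (r + \<i> * q * complex_of_real (- s))"
  proof (rule eventually_mono[OF eventually_gt_at_top[of 0]])
    fix s :: real assume s: "s > 0"
    have 1: "r + \<i> * q * complex_of_real s = complex_of_real s * (\<i> * q + r * complex_of_real (1 / s))"
      using s by (simp add: algebra_simps)
    have 2: "r + \<i> * q * complex_of_real (- s) = complex_of_real s * (- \<i> * q + r * complex_of_real (1 / s))"
      using s by (simp add: algebra_simps)
    show "Ln (\<i> * q + r * complex_of_real (1 / s)) - Ln (- \<i> * q + r * complex_of_real (1 / s)) =
         Ln (r + \<i> * q * complex_of_real s) - Ln (r + \<i> * q * complex_of_real (- s))"
      unfolding 1 2 using s inz[OF s] by (simp add: Ln_times_of_real)
  qed
  have t0: "((\<lambda>s::real. 1 / s) \<longlongrightarrow> 0) at_top" by real_asymp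
  have n1: "\<i> * q \<notin> \<real>\<^sub>\<le>\<^sub>0" "- \<i> * q \<notin> \<real>\<^sub>\<le>\<^sub>0" using q0 by (auto simp: complex_nonpos_Reals_iff)
  have "((\<lambda>s. Ln (\<i> * q + r * complex_of_real (1 / s)) - Ln (- \<i> * q + r * complex_of_real (1 / s))) \<longlongrightarrow>
      Ln (\<i> * q + r * complex_of_real 0) - Ln (- \<i> * q + r * complex_of_real 0)) at_top"
    by (intro tendsto_intros t0) (use n1 in auto)
  moreover have "Ln (\<i> * q + r * complex_of_real 0) - Ln (- \<i> * q + r * complex_of_real 0) = \<i> * of_real pi"
    using Ln_iq[OF q0] by simp
  ultimately show ?thesis using Lim_transform_eventually[OF _ ev] by simp
qed

lemma frac_aux:
  fixes A B r k :: complex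
  assumes "A \<noteq> 0" "B \<noteq> 0" "r \<noteq> 0" "k \<noteq> 0" "A + B = 2 * r"
  shows "(inverse A * k - inverse B * (- k)) / (2 * r * k) = 1 / (A * B)"
proof -
  have "inverse A * k - inverse B * (- k) = k * (A + B) / (A * B)"
    using assms(1-4) by (simp add: field_simps)
  also have "\<dots> = (2 * r * k) / (A * B)" unfolding assms(5) by (simp add: algebra_simps)
  finally show ?thesis using assms by simp
qed

lemma arct:
  fixes \<alpha> \<beta> :: complex
  assumes \<alpha>: "Re \<alpha> > 0" and \<beta>: "Re \<beta> > 0"
    and int: "integrable lborel (\<lambda>s. 1 / (\<alpha> + \<beta> * (complex_of_real s)\<^sup>2))"
  shows "integral\<^sup>L lborel (\<lambda>s. 1 / (\<alpha> + \<beta> * (complex_of_real s)\<^sup>2)) = of_real pi / (csqrt \<alpha> * csqrt \<beta>)"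
proof -
  define r where "r = csqrt \<alpha>"
  define q where "q = csqrt \<beta>"
  have hr: "Re r > \<bar>Im r\<bar>" unfolding r_def by (rule csqrt_re_gt[OF \<alpha>])
  have hq: "Re q > \<bar>Im q\<bar>" unfolding q_def by (rule csqrt_re_gt[OF \<beta>])
  have r0: "r \<noteq> 0" and q0: "q \<noteq> 0" using hr hq by auto
  have r2: "r * r = \<alpha>" and q2: "q * q = \<beta>" unfolding r_def q_def by (simp_all flip: power2_eq_square)
  define f where "f s = 1 / (\<alpha> + \<beta> * (complex_of_real s)\<^sup>2)" for s
  define G where "G w = (Ln (r + \<i> * q * w) - Ln (r + \<i> * q * (- w))) / (2 * r * \<i> * q)" for w
  have np1: "r + \<i> * q * complex_of_real s \<notin> \<real>\<^sub>\<le>\<^sub>0" for s using notnp[OF hr hq] .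
  have np2: "r + \<i> * q * (- complex_of_real s) \<notin> \<real>\<^sub>\<le>\<^sub>0" for s using notnp[OF hr hq, of "-s"] by simp
  have nz1: "r + \<i> * q * complex_of_real s \<noteq> 0" for s using np1[of s] by auto
  have nz2: "r + \<i> * q * (- complex_of_real s) \<noteq> 0" for s using np2[of s] by auto
  have prod: "(r + \<i> * q * complex_of_real s) * (r + \<i> * q * (- complex_of_real s)) = \<alpha> + \<beta> * (complex_of_real s)\<^sup>2" for s
  proof -
    have "(r + \<i> * q * complex_of_real s) * (r + \<i> * q * (- complex_of_real s)) = r * r + (q * q) * (complex_of_real s)\<^sup>2"
      by (simp add: algebra_simps power2_eq_square)
    then show ?thesis unfolding r2 q2 .
  qed
  have dG: "(G has_field_derivative f s) (at (complex_of_real s))" for s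
  proof -
    have d1: "((\<lambda>w. Ln (r + \<i> * q * w)) has_field_derivative inverse (r + \<i> * q * complex_of_real s) * (\<i> * q)) (at (complex_of_real s))"
      by (rule derivative_eq_intros refl np1 | simp)+
    have d2: "((\<lambda>w. Ln (r + \<i> * q * (- w))) has_field_derivative inverse (r + \<i> * q * (- complex_of_real s)) * (- (\<i> * q))) (at (complex_of_real s))"
      by (rule derivative_eq_intros refl np2 | simp)+
    have "(G has_field_derivative (inverse (r + \<i> * q * complex_of_real s) * (\<i> * q) - inverse (r + \<i> * q * (- complex_of_real s)) * (- (\<i> * q))) / (2 * r * \<i> * q)) (at (complex_of_real s))"
      unfolding G_def by (intro DERIV_cdivide DERIV_diff d1 d2)
    moreover have "(inverse (r + \<i> * q * complex_of_real s) * (\<i> * q) - inverse (r + \<i> * q * (- complex_of_real s)) * (- (\<i> * q))) / (2 * r * \<i> * q) = f s"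
    proof -
      have "(inverse (r + \<i> * q * complex_of_real s) * (\<i> * q) - inverse (r + \<i> * q * (- complex_of_real s)) * (- (\<i> * q))) / (2 * r * (\<i> * q))
          = 1 / ((r + \<i> * q * complex_of_real s) * (r + \<i> * q * (- complex_of_real s)))"
        by (rule frac_aux) (use nz1[of s] nz2[of s] r0 q0 in auto)
      then show ?thesis unfolding prod f_def by (simp add: mult.assoc)
    qed
    ultimately show ?thesis by simp
  qed
  have lim1: "((\<lambda>s. G (complex_of_real s)) \<longlongrightarrow> \<i> * of_real pi / (2 * r * \<i> * q)) at_top"
    unfolding G_def using tendsto_divide[OF Ln_diff_lim[OF hr hq] tendsto_const, of "2 * r * \<i> * q"] r0 q0 by simp
  have lim2: "((\<lambda>s. G (complex_of_real s)) \<longlongrightarrow> - (\<i> * of_real pi / (2 * r * \<i> * q))) at_bot"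
  proof -
    have "((\<lambda>s. G (complex_of_real (- s))) \<longlongrightarrow> - (\<i> * of_real pi / (2 * r * \<i> * q))) at_top"
    proof -
      have "G (complex_of_real (- s)) = - G (complex_of_real s)" for s
        unfolding G_def minus_divide_left by simp
      then show ?thesis using tendsto_minus[OF lim1] by simp
    qed
    then show ?thesis by (simp add: filterlim_at_bot_mirror)
  qed
  have cf: "isCont f s" for s
  proof -
    have "\<alpha> + \<beta> * (complex_of_real s)\<^sup>2 \<noteq> 0" using prod[of s] nz1[of s] nz2[of s] by (metis mult_eq_0_iff)
    then show ?thesis unfolding f_def by (intro continuous_intros) auto
  qed
  have "(LBINT s=-\<infinity>..\<infinity>. f s) = \<i> * of_real pi / (2 * r * \<i> * q) - (- (\<i> * of_real pi / (2 * r * \<i> * q)))"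
  proof (rule interval_integral_FTC_integrable)
    show "set_integrable lborel (einterval (-\<infinity>) \<infinity>) f" using int unfolding f_def[abs_def] by (simp add: set_integrable_def)
    show "((\<lambda>s. G (complex_of_real s)) has_vector_derivative f x) (at x)" for x
      by (rule has_vector_derivative_real_field[OF dG])
    show "(((\<lambda>s. G (complex_of_real s)) \<circ> real_of_ereal) \<longlongrightarrow> - (\<i> * of_real pi / (2 * r * \<i> * q))) (at_right (-\<infinity>))"
      unfolding ereal_tendsto_simps by (rule lim2)
    show "(((\<lambda>s. G (complex_of_real s)) \<circ> real_of_ereal) \<longlongrightarrow> \<i> * of_real pi / (2 * r * \<i> * q)) (at_left \<infinity>)"
      unfolding ereal_tendsto_simps by (rule lim1)
  qed (auto intro: cf)
  then have "integral\<^sup>L lborel f = \<i> * of_real pi / (2 * r * \<i> * q) - (- (\<i> * of_real pi / (2 * r * \<i> * q)))"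
    by (simp add: interval_lebesgue_integral_def set_lebesgue_integral_def)
  also have "\<dots> = of_real pi / (r * q)" using r0 q0 by (simp add: field_simps)
  finally show ?thesis unfolding f_def[abs_def] r_def q_def .
qed

lemma gint: "Re \<gamma> > 0 \<Longrightarrow> integrable lborel (\<lambda>y. exp (- (\<gamma> * (complex_of_real y)\<^sup>2)))"
proof -
  assume g: "Re \<gamma> > 0"
  show ?thesis
  proof (rule Bochner_Integration.integrable_bound)
    show "integrable lborel (\<lambda>y. (1 + \<bar>y\<bar>) ^ 0 * exp (- Re \<gamma> * y\<^sup>2))"
      by (rule gauss_poly_int) (use g in auto)
    show "(\<lambda>y. exp (- (\<gamma> * (complex_of_real y)\<^sup>2))) \<in> borel_measurable lborel"
      by (intro cont_meas continuous_intros)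
    show "AE y in lborel. norm (exp (- (\<gamma> * (complex_of_real y)\<^sup>2))) \<le> norm ((1 + \<bar>y\<bar>) ^ 0 * exp (- Re \<gamma> * y\<^sup>2))"
      by (intro AE_I2) (simp add: norm_gexp)
  qed
qed

lemma base:
  assumes \<alpha>: "Re \<alpha> > 0" and \<beta>: "Re \<beta> > 0"
  shows "II \<alpha> \<beta> (\<lambda>x y. 1) = of_real pi / (csqrt \<alpha> * csqrt \<beta>)"
proof -
  define e1 where "e1 x = exp (- (\<alpha> * (complex_of_real x)\<^sup>2))" for x
  define e2 where "e2 y = exp (- (\<beta> * (complex_of_real y)\<^sup>2))" for y
  define K where "K x s = complex_of_real \<bar>x\<bar> * exp (- ((\<alpha> + \<beta> * (complex_of_real s)\<^sup>2) * (complex_of_real x)\<^sup>2))" for x s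
  have Eg: "Eg \<alpha> \<beta> x y = e1 x * e2 y" for x y unfolding Eg_def e1_def e2_def ..
  have e2i: "integrable lborel e2" unfolding e2_def[abs_def] by (rule gint[OF \<beta>])
  have ek: "e1 x * e2 (0 + x * s) = exp (- ((\<alpha> + \<beta> * (complex_of_real s)\<^sup>2) * (complex_of_real x)\<^sup>2))" for x s
  proof -
    have "- (\<alpha> * (complex_of_real x)\<^sup>2) + - (\<beta> * (complex_of_real (x * s))\<^sup>2) = - ((\<alpha> + \<beta> * (complex_of_real s)\<^sup>2) * (complex_of_real x)\<^sup>2)"
      by (simp add: algebra_simps power2_eq_square)
    then show ?thesis unfolding e1_def e2_def by (simp add: exp_add[symmetric])
  qed
  have Kcont: "continuous_on UNIV (\<lambda>p. K (fst p) (snd p))" unfolding K_def by (intro continuous_intros)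
  have Kmeas[measurable]: "(\<lambda>(x, s). K x s) \<in> borel_measurable (lborel \<Otimes>\<^sub>M lborel)"
    using cont_meas[OF Kcont] by (simp add: lborel_prod case_prod_beta')
  have Egcont: "continuous_on UNIV (\<lambda>p. Eg \<alpha> \<beta> (fst p) (snd p))" by (rule continuous_Eg)
  have Egmeas[measurable]: "(\<lambda>(x, y). Eg \<alpha> \<beta> x y) \<in> borel_measurable (lborel \<Otimes>\<^sub>M lborel)"
    using cont_meas[OF Egcont] by (simp add: lborel_prod case_prod_beta')
  have inner: "(\<integral>y. Eg \<alpha> \<beta> x y \<partial>lborel) = (\<integral>s. K x s \<partial>lborel)" if x: "x \<noteq> 0" for x
  proof -
    have "(\<integral>y. Eg \<alpha> \<beta> x y \<partial>lborel) = e1 x * integral\<^sup>L lborel e2" unfolding Eg by simp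
    also have "integral\<^sup>L lborel e2 = \<bar>x\<bar> *\<^sub>R (\<integral>s. e2 (0 + x * s) \<partial>lborel)"
      by (rule lborel_integral_real_affine[OF x])
    also have "e1 x * (\<bar>x\<bar> *\<^sub>R (\<integral>s. e2 (0 + x * s) \<partial>lborel)) = (\<integral>s. complex_of_real \<bar>x\<bar> * (e1 x * e2 (0 + x * s)) \<partial>lborel)"
      by (simp add: scaleR_conv_of_real algebra_simps)
    also have "\<dots> = (\<integral>s. K x s \<partial>lborel)" unfolding ek K_def ..
    finally show ?thesis .
  qed
  have Kint: "integrable (lborel \<Otimes>\<^sub>M lborel) (\<lambda>(x, s). K x s)"
  proof (rule lborel_pair.Fubini_integrable)
    show "(\<lambda>(x, s). K x s) \<in> borel_measurable (lborel \<Otimes>\<^sub>M lborel)" by (rule Kmeas)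
    show "AE x in lborel. integrable lborel (\<lambda>s. (\<lambda>(x, s). K x s) (x, s))"
      using AE_lborel_singleton[of 0]
    proof eventually_elim
      case (elim x)
      have "integrable lborel (\<lambda>s. e2 (0 + x * s))" by (rule lborel_integrable_real_affine[OF e2i elim])
      then have "integrable lborel (\<lambda>s. complex_of_real \<bar>x\<bar> * (e1 x * e2 (0 + x * s)))" by simp
      then show ?case unfolding ek K_def by simp
    qed
    define Gb where "Gb = (\<integral>y. exp (- Re \<beta> * y\<^sup>2) \<partial>lborel)"
    have gi: "integrable lborel (\<lambda>x. (1 + \<bar>x\<bar>) ^ 0 * exp (- Re \<alpha> * x\<^sup>2) * Gb)"
      by (intro integrable_mult_left gauss_poly_int) (use \<alpha> in auto)
    have ae: "AE x in lborel. (1 + \<bar>x\<bar>) ^ 0 * exp (- Re \<alpha> * x\<^sup>2) * Gb = (\<integral>s. norm ((\<lambda>(x, s). K x s) (x, s)) \<partial>lborel)"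
      using AE_lborel_singleton[of 0]
    proof eventually_elim
      case (elim x)
      have nK: "norm (K x s) = exp (- Re \<alpha> * x\<^sup>2) * (\<bar>x\<bar> * exp (- Re \<beta> * (0 + x * s)\<^sup>2))" for s
      proof -
        have "norm (K x s) = \<bar>x\<bar> * exp (- Re (\<alpha> + \<beta> * (complex_of_real s)\<^sup>2) * x\<^sup>2)"
          unfolding K_def norm_mult norm_gexp by simp
        also have "Re (\<alpha> + \<beta> * (complex_of_real s)\<^sup>2) = Re \<alpha> + Re \<beta> * s\<^sup>2"
          by (simp add: power2_eq_square)
        finally show ?thesis by (simp add: algebra_simps power2_eq_square exp_add[symmetric])
      qed
      have Gbe: "Gb = \<bar>x\<bar> *\<^sub>R (\<integral>s. exp (- Re \<beta> * (0 + x * s)\<^sup>2) \<partial>lborel)"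
        unfolding Gb_def by (rule lborel_integral_real_affine[OF elim])
      have "(\<integral>s. norm (K x s) \<partial>lborel) = exp (- Re \<alpha> * x\<^sup>2) * (\<bar>x\<bar> * (\<integral>s. exp (- Re \<beta> * (0 + x * s)\<^sup>2) \<partial>lborel))"
        unfolding nK by (simp only: integral_mult_right_zero)
      then show ?case using Gbe by simp
    qed
    show "integrable lborel (\<lambda>x. \<integral>s. norm ((\<lambda>(x, s). K x s) (x, s)) \<partial>lborel)"
      by (rule integrable_cong_AE_imp[OF gi _ ae]) measurable
  qed
  have "II \<alpha> \<beta> (\<lambda>x y. 1) = (\<integral>x. (\<integral>y. Eg \<alpha> \<beta> x y \<partial>lborel) \<partial>lborel)"
    unfolding II_eq using lborel_pair.integral_fst[OF pb_int'[OF \<alpha> \<beta> pb_const[of 1]]] by simp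
  also have "\<dots> = (\<integral>x. (\<integral>s. K x s \<partial>lborel) \<partial>lborel)"
    by (rule integral_cong_AE) (use AE_lborel_singleton[of 0] inner in \<open>auto elim: AE_mp\<close>)
  also have "\<dots> = (\<integral>s. (\<integral>x. K x s \<partial>lborel) \<partial>lborel)"
    by (rule lborel_pair.Fubini_integral[symmetric]) (use Kint in simp)
  also have "\<dots> = (\<integral>s. 1 / (\<alpha> + \<beta> * (complex_of_real s)\<^sup>2) \<partial>lborel)"
  proof (rule Bochner_Integration.integral_cong[OF refl])
    fix s :: real
    have "Re (\<alpha> + \<beta> * (complex_of_real s)\<^sup>2) > 0"
    proof -
      have "Re (\<alpha> + \<beta> * (complex_of_real s)\<^sup>2) = Re \<alpha> + Re \<beta> * s\<^sup>2" by (simp add: power2_eq_square)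
      then show ?thesis using \<alpha> \<beta> by (simp add: add_pos_nonneg)
    qed
    then show "(\<integral>x. K x s \<partial>lborel) = 1 / (\<alpha> + \<beta> * (complex_of_real s)\<^sup>2)"
      unfolding K_def by (rule abs_gauss(2))
  qed
  also have "\<dots> = of_real pi / (csqrt \<alpha> * csqrt \<beta>)"
  proof (rule arct[OF \<alpha> \<beta>])
    have "integrable lborel (\<lambda>s. \<integral>x. K x s \<partial>lborel)"
      by (rule lborel_pair.integrable_snd) (use Kint in simp)
    moreover have "(\<integral>x. K x s \<partial>lborel) = 1 / (\<alpha> + \<beta> * (complex_of_real s)\<^sup>2)" for s
    proof -
      have "Re (\<alpha> + \<beta> * (complex_of_real s)\<^sup>2) = Re \<alpha> + Re \<beta> * s\<^sup>2" by (simp add: power2_eq_square)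
      then have "Re (\<alpha> + \<beta> * (complex_of_real s)\<^sup>2) > 0" using \<alpha> \<beta> by (simp add: add_pos_nonneg)
      then show ?thesis unfolding K_def by (rule abs_gauss(2))
    qed
    ultimately show "integrable lborel (\<lambda>s. 1 / (\<alpha> + \<beta> * (complex_of_real s)\<^sup>2))" by simp
  qed
  finally show ?thesis .
qed

lemma lborel_complex: "distr (lborel :: (real \<times> real) measure) borel (\<lambda>p. Complex (fst p) (snd p)) = (lborel :: complex measure)"
proof (rule lborel_eqI[symmetric])
  have Tm: "(\<lambda>p. Complex (fst p) (snd p)) \<in> measurable (lborel :: (real \<times> real) measure) borel"
  proof -
    have "continuous_on UNIV (\<lambda>p::real\<times>real. Complex (fst p) (snd p))"
      unfolding Complex_eq by (intro continuous_intros)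
    then show ?thesis by (rule cont_meas)
  qed
  fix l u :: complex
  assume le: "\<And>b. b \<in> Basis \<Longrightarrow> l \<bullet> b \<le> u \<bullet> b"
  have le1: "Re l \<le> Re u" "Im l \<le> Im u" using le[of 1] le[of \<i>] by (auto simp: Basis_complex_def)
  have pre: "(\<lambda>p. Complex (fst p) (snd p)) -` box l u = box (Re l, Im l) (Re u, Im u)"
    by (auto simp: box_def Basis_complex_def Basis_prod_def ball_Un)
  have "emeasure (distr lborel borel (\<lambda>p. Complex (fst p) (snd p))) (box l u) = emeasure lborel (box (Re l, Im l) (Re u, Im u))"
    by (subst emeasure_distr[OF Tm]) (auto simp: pre)
  also have "\<dots> = (\<Prod>b\<in>Basis. (u - l) \<bullet> b)"
    using le1 by (simp add: emeasure_lborel_box_eq Basis_prod_def Basis_complex_def ball_Un prod.union_disjoint)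
  finally show "emeasure (distr lborel borel (\<lambda>p. Complex (fst p) (snd p))) (box l u) = (\<Prod>b\<in>Basis. (u - l) \<bullet> b)" .
qed simp

lemma csqrt_mult_pos:
  assumes "Re x > 0" "Re y > 0"
  shows "csqrt x * csqrt y = csqrt (x * y)"
proof -
  define u where "u = csqrt x"
  define v where "v = csqrt y"
  have hx: "Re u > \<bar>Im u\<bar>" unfolding u_def by (rule csqrt_re_gt[OF assms(1)])
  have hy: "Re v > \<bar>Im v\<bar>" unfolding v_def by (rule csqrt_re_gt[OF assms(2)])
  have "\<bar>Im u\<bar> * \<bar>Im v\<bar> < Re u * Re v"
    using hx hy by (intro mult_strict_mono) auto
  moreover have "Im u * Im v \<le> \<bar>Im u\<bar> * \<bar>Im v\<bar>"
    by (metis abs_ge_self abs_mult)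
  ultimately have "Re (u * v) > 0" by simp
  moreover have "(u * v)\<^sup>2 = x * y" unfolding u_def v_def by (simp add: power_mult_distrib)
  ultimately show ?thesis unfolding u_def[symmetric] v_def[symmetric] by (intro csqrt_unique[symmetric]) auto
qed

theorem lemma3p1:
  fixes b a0 t :: real and k l :: nat
  assumes "b \<noteq> 0" and "a0 > \<bar>b\<bar>"
  defines "a \<equiv> complex_of_real a0 - \<i> * complex_of_real t"
  defines "c \<equiv> csqrt ((a\<^sup>2 - (complex_of_real b)\<^sup>2) / (2 * complex_of_real b))"
  shows "((\<lambda>z. hermite l (c * z) * hermite k (c * cnj z) * W a b z) has_integral
           (if l = k then of_nat (fact k) * complex_of_real pi * (2 * a) ^ k
                           / (csqrt (a\<^sup>2 - (complex_of_real b)\<^sup>2) * (complex_of_real b) ^ k)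
            else 0)) UNIV"
proof -
  define B where "B = complex_of_real b"
  define f where "f z = hermite l (c * z) * hermite k (c * cnj z) * W a b z" for z
  have Rea: "Re a = a0" unfolding a_def by simp
  have \<alpha>: "Re (a - B) > 0" using assms(2) Rea unfolding B_def by simp
  have \<beta>: "Re (a + B) > 0" using assms(2) Rea unfolding B_def by simp
  have b0: "B \<noteq> 0" using assms(1) unfolding B_def by simp
  have c2: "c\<^sup>2 = (a\<^sup>2 - B\<^sup>2) / (2 * B)" unfolding c_def B_def by simp
  have fe: "f (Complex x y) = P c l k x y * Eg (a - B) (a + B) x y" for x y
  proof -
    have z: "Complex x y = complex_of_real x + \<i> * complex_of_real y" by (rule Complex_eq)
    have h1: "c * Complex x y = c * complex_of_real x + (\<i> * c) * complex_of_real y"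
      unfolding z by (simp add: algebra_simps)
    have h2: "c * cnj (Complex x y) = c * complex_of_real x + (- \<i> * c) * complex_of_real y"
      by (simp add: algebra_simps Complex_eq)
    have nrm: "complex_of_real ((cmod (Complex x y))\<^sup>2) = (complex_of_real x)\<^sup>2 + (complex_of_real y)\<^sup>2"
      by (simp add: cmod_power2)
    have sq: "(Complex x y)\<^sup>2 + (cnj (Complex x y))\<^sup>2 = 2 * (complex_of_real x)\<^sup>2 - 2 * (complex_of_real y)\<^sup>2"
      unfolding z by (simp add: power2_eq_square algebra_simps)
    have eqn: "- a * complex_of_real ((cmod (Complex x y))\<^sup>2) + complex_of_real b / 2 * ((Complex x y)\<^sup>2 + (cnj (Complex x y))\<^sup>2)
        = - ((a - B) * (complex_of_real x)\<^sup>2) + - ((a + B) * (complex_of_real y)\<^sup>2)"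
      unfolding nrm sq B_def by (simp add: algebra_simps)
    have "W a b (Complex x y) = Eg (a - B) (a + B) x y"
      unfolding W_def eqn Eg_def by (rule exp_add)
    then show ?thesis unfolding f_def Submission.P_def[OF \<alpha> \<beta> b0 c2] h1 h2 by simp
  qed
  have Tm: "(\<lambda>p. Complex (fst p) (snd p)) \<in> measurable (lborel :: (real \<times> real) measure) borel"
  proof -
    have "continuous_on UNIV (\<lambda>p::real\<times>real. Complex (fst p) (snd p))"
      unfolding Complex_eq by (intro continuous_intros)
    then show ?thesis by (rule cont_meas)
  qed
  have fm: "f \<in> borel_measurable borel"
  proof -
    have "continuous_on UNIV f" unfolding f_def W_def by (intro continuous_intros)
    then show ?thesis by (rule borel_measurable_continuous_onI)
  qed
  have fT: "(\<lambda>p. f (Complex (fst p) (snd p))) = (\<lambda>(x, y). P c l k x y * Eg (a - B) (a + B) x y)"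
    by (auto simp: fe)
  have fi: "integrable lborel f"
  proof -
    have "integrable (distr lborel borel (\<lambda>p. Complex (fst p) (snd p))) f"
      by (subst integrable_distr_eq[OF Tm fm]) (unfold fT, rule pb_int[OF \<alpha> \<beta> pbP[OF \<alpha> \<beta> b0 c2]])
    then show ?thesis unfolding lborel_complex .
  qed
  have fint: "integral\<^sup>L lborel f = I a B c l k"
  proof -
    have "integral\<^sup>L lborel f = integral\<^sup>L (distr lborel borel (\<lambda>p. Complex (fst p) (snd p))) f"
      unfolding lborel_complex ..
    also have "\<dots> = II (a - B) (a + B) (P c l k)"
      unfolding integral_distr[OF Tm fm] fT II_def ..
    also have "\<dots> = I a B c l k" unfolding I_def[OF \<alpha> \<beta> b0 c2] ..
    finally show ?thesis .
  qed
  have I00: "I a B c 0 0 = of_real pi / csqrt (a\<^sup>2 - B\<^sup>2)"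
  proof -
    have "P c 0 0 = (\<lambda>x y. 1)" by (intro ext) (simp add: Submission.P_def[OF \<alpha> \<beta> b0 c2])
    then have "I a B c 0 0 = of_real pi / (csqrt (a - B) * csqrt (a + B))"
      unfolding I_def[OF \<alpha> \<beta> b0 c2] using base[OF \<alpha> \<beta>] by simp
    also have "csqrt (a - B) * csqrt (a + B) = csqrt (a\<^sup>2 - B\<^sup>2)"
    proof -
      have e: "(a - B) * (a + B) = a\<^sup>2 - B\<^sup>2" by (simp add: power2_eq_square algebra_simps)
      show ?thesis unfolding csqrt_mult_pos[OF \<alpha> \<beta>] e ..
    qed
    finally show ?thesis .
  qed
  have val: "integral\<^sup>L lborel f = (if l = k then of_nat (fact k) * complex_of_real pi * (2 * a) ^ k
                           / (csqrt (a\<^sup>2 - (complex_of_real b)\<^sup>2) * (complex_of_real b) ^ k) else 0)"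
  proof -
    have "integral\<^sup>L lborel f = (if l = k then of_nat (fact k) * (2 * a / B) ^ k * (of_real pi / csqrt (a\<^sup>2 - B\<^sup>2)) else 0)"
      unfolding fint I_formula[OF \<alpha> \<beta> b0 c2, of l k] I00 ..
    also have "\<dots> = (if l = k then of_nat (fact k) * complex_of_real pi * (2 * a) ^ k
                           / (csqrt (a\<^sup>2 - B\<^sup>2) * B ^ k) else 0)"
      by (simp add: power_divide ac_simps)
    finally show ?thesis unfolding B_def .
  qed
  show ?thesis using has_integral_integral_lborel[OF fi] unfolding val by (simp add: f_def[abs_def])
qed

end
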